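(* Let $\rho>0$ and let $\bar\mu^\rho$ be the unique probability measure on $(\mathcal{P}_{\mathbb{Q}},\mathcal{F}_{\mathbb{Q}})$ putting weight on right-continuous partitions such that $\mathrm{Rest}_z\star\bar\mu^\rho=\mu^{\rho,z}$ for every finite $z\subset\mathbb{Q}^+$. There exists a unique measure $\mu^\rho$ on $(\mathcal{P}^{loc},\mathcal{F})$ such that $\mathrm{Rest}_{\mathbb{Q}}\star\mu^\rho=\bar\mu^\rho$.
   Context: $\mathcal{P}_{\mathbb{Q}}$ is the set of partitions of $\mathbb{Q}^+$ with the $\sigma$-field $\mathcal{F}_{\mathbb{Q}}$ generated by the restriction maps $\mathrm{Rest}_z$ to finite $z\subset\mathbb{Q}^+$; a partition of $\mathbb{Q}^+$ is right-continuous if whenever $\mathbb{Q}^+\ni x_n\downarrow x\in\mathbb{Q}^+$, $x_n$ lies in the same segment (maximal connected subset of a block) as $x$ for large $n$. $\mathcal{P}^{loc}$ is the set of right-continuous (segments are left-closed right-open intervals) and locally finite partitions of $\mathbb{R}^+$, with $\sigma$-field $\mathcal{F}$ generated by the restriction maps to finite subsets; $\mathrm{Rest}_{\mathbb{Q}}$ maps $\pi\in\mathcal{P}^{loc}$ to the partition of $\mathbb{Q}^+$ it induces. For finite $z=\{z_0<\dots<z_n\}$, $\mu^{\rho,z}$ is the unique invariant probability measure of the ARG $\Gamma^{\rho,z}$: the Markov chain on partitions of $z$ in which each pair of blocks merges at rate $1$, and each block $\{z_{i_1}<\dots<z_{i_k}\}$ splits into $\{z_{i_1},\dots,z_{i_j}\}$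 and $\{z_{i_{j+1}},\dots,z_{i_k}\}$ at rate $\rho(z_{i_{j+1}}-z_{i_j})$. $f\star\mu=\mu\circ f^{-1}$. *)

theory Defs
  imports "HOL-Probability.Probability"
begin

definition Parts :: "'a set \<Rightarrow> 'a set set set" where
  "Parts A = {P. partition_on A P}"

definition Rest :: "'a set \<Rightarrow> 'a set set \<Rightarrow> 'a set set" where
  "Rest z P = (\<lambda>B. B \<inter> z) ` P - {{}}"

definition convex_in :: "'a::linorder set \<Rightarrow> 'a set \<Rightarrow> bool" where
  "convex_in A S \<longleftrightarrow> S \<subseteq> A \<and> (\<forall>x\<in>S. \<forall>y\<in>S. \<forall>w\<in>A. x \<le> w \<and> w \<le> y \<longrightarrow> w \<in> S)"

definition segment :: "'a::linorder set \<Rightarrow> 'a set set \<Rightarrow> 'a set \<Rightarrow> bool" where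
  "segment A P S \<longleftrightarrow> S \<noteq> {} \<and> convex_in A S \<and> (\<exists>B\<in>P. S \<subseteq> B) \<and>
     (\<forall>T. convex_in A T \<and> (\<exists>B\<in>P. T \<subseteq> B) \<and> S \<subseteq> T \<longrightarrow> T = S)"

definition part_measure :: "'a set \<Rightarrow> 'a set set set \<Rightarrow> 'a set set measure" where
  "part_measure A X = sigma X
     {{P \<in> X. Rest z P \<in> E} | z E. finite z \<and> z \<subseteq> A \<and> E \<subseteq> Parts z}"

definition Qplus :: "rat set" where "Qplus = {q. 0 \<le> q}"
definition Rplus :: "real set" where "Rplus = {x. 0 \<le> x}"

definition right_cont_Q :: "rat set set \<Rightarrow> bool" where
  "right_cont_Q P \<longleftrightarrow> (\<forall>x\<in>Qplus. \<forall>X::nat \<Rightarrow> rat. (\<forall>n. X n \<in> Qplus) \<and> decseq X \<and>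
      (\<lambda>n. real_of_rat (X n)) \<longlonglongrightarrow> real_of_rat x \<longrightarrow>
      (\<forall>\<^sub>F n in sequentially. \<exists>S. segment Qplus P S \<and> x \<in> S \<and> X n \<in> S))"

definition P_Q :: "rat set set measure" where
  "P_Q = part_measure Qplus (Parts Qplus)"

definition right_cont_R :: "real set set \<Rightarrow> bool" where
  "right_cont_R P \<longleftrightarrow> (\<forall>S. segment Rplus P S \<longrightarrow>
      (\<exists>a b. a < b \<and> S = {a..<b}) \<or> (\<exists>a. S = {a..}))"

definition loc_finite_R :: "real set set \<Rightarrow> bool" where
  "loc_finite_R P \<longleftrightarrow> (\<forall>t. finite {S. segment Rplus P S \<and> S \<inter> {0..t} \<noteq> {}})"

definition Ploc_set :: "real set set set" where
  "Ploc_set = {P \<in> Parts Rplus. right_cont_R P \<and> loc_finite_R P}"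

definition P_loc :: "real set set measure" where
  "P_loc = part_measure Rplus Ploc_set"

definition Rest_Q :: "real set set \<Rightarrow> rat set set" where
  "Rest_Q P = (\<lambda>B. real_of_rat -` B \<inter> Qplus) ` P - {{}}"

definition merge_step :: "'a set set \<Rightarrow> 'a set set \<Rightarrow> bool" where
  "merge_step x y \<longleftrightarrow> (\<exists>B\<in>x. \<exists>C\<in>x. B \<noteq> C \<and> y = insert (B \<union> C) (x - {B, C}))"

definition split_at :: "'a::linorder set set \<Rightarrow> 'a set \<Rightarrow> 'a \<Rightarrow> 'a \<Rightarrow> 'a set set" where
  "split_at x B a b = insert {c\<in>B. c \<le> a} (insert {c\<in>B. b \<le> c} (x - {B}))"

definition split_triples :: "'a::linorder set set \<Rightarrow> 'a set set \<Rightarrow> ('a set \<times> 'a \<times> 'a) set" where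
  "split_triples x y = {(B, a, b). B \<in> x \<and> a \<in> B \<and> b \<in> B \<and> a < b \<and>
       \<not> (\<exists>c\<in>B. a < c \<and> c < b) \<and> y = split_at x B a b}"

definition arg_rate :: "real \<Rightarrow> rat set set \<Rightarrow> rat set set \<Rightarrow> real" where
  "arg_rate \<rho> x y = (if merge_step x y then 1 else 0) +
      (\<Sum>(B, a, b)\<in>split_triples x y. \<rho> * real_of_rat (b - a))"

definition arg_invariant :: "real \<Rightarrow> rat set \<Rightarrow> rat set set measure \<Rightarrow> bool" where
  "arg_invariant \<rho> z M \<longleftrightarrow> prob_space M \<and> space M = Parts z \<and> sets M = Pow (Parts z) \<and>
     (\<forall>y\<in>Parts z. (\<Sum>x\<in>Parts z - {y}. measure M {x} * arg_rate \<rho> x y) =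
                   measure M {y} * (\<Sum>x\<in>Parts z - {y}. arg_rate \<rho> y x))"

definition mu_rz :: "real \<Rightarrow> rat set \<Rightarrow> rat set set measure" where
  "mu_rz \<rho> z = (THE M. arg_invariant \<rho> z M)"

end

theory Submission
  imports Defs
begin


definition same :: "'a set set \<Rightarrow> 'a \<Rightarrow> 'a \<Rightarrow> bool" where
  "same P a b \<longleftrightarrow> (\<exists>B\<in>P. a \<in> B \<and> b \<in> B)"

lemma same_sym: "same P a b \<Longrightarrow> same P b a"
  unfolding same_def by blast

lemma same_refl: "partition_on A P \<Longrightarrow> a \<in> A \<Longrightarrow> same P a a"
  unfolding same_def partition_on_def by blast

lemma same_in: "partition_on A P \<Longrightarrow> same P a b \<Longrightarrow> a \<in> A \<and> b \<in> A"
  unfolding same_def partition_on_def by blast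

lemma same_block: "partition_on A P \<Longrightarrow> B \<in> P \<Longrightarrow> C \<in> P \<Longrightarrow> a \<in> B \<Longrightarrow> a \<in> C \<Longrightarrow> B = C"
  unfolding partition_on_def disjoint_def by blast

lemma same_trans: "partition_on A P \<Longrightarrow> same P a b \<Longrightarrow> same P b c \<Longrightarrow> same P a c"
  unfolding same_def using same_block by metis

lemma Parts_iff: "P \<in> Parts A \<longleftrightarrow> partition_on A P"
  by (simp add: Parts_def)

lemma Rest_part: "partition_on A P \<Longrightarrow> z \<subseteq> A \<Longrightarrow> partition_on z (Rest z P)"
proof -
  assume a: "partition_on A P" "z \<subseteq> A"
  have "Rest z P = (\<inter>) z ` P - {{}}" unfolding Rest_def by (auto simp: Int_commute)
  moreover have "z \<inter> A = z" using a by auto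
  ultimately show ?thesis using partition_on_restrict[OF a(1), of z] by simp
qed

lemma same_Rest: "x \<in> z \<Longrightarrow> y \<in> z \<Longrightarrow> same (Rest z P) x y \<longleftrightarrow> same P x y"
proof
  assume "x \<in> z" "y \<in> z" "same (Rest z P) x y"
  then obtain C where C: "C \<in> Rest z P" "x \<in> C" "y \<in> C" unfolding same_def by blast
  from C(1) obtain B where "B \<in> P" "C = B \<inter> z" unfolding Rest_def by blast
  then show "same P x y" using C unfolding same_def by blast
next
  assume a: "x \<in> z" "y \<in> z" "same P x y"
  then obtain B where "B \<in> P" "x \<in> B" "y \<in> B" unfolding same_def by blast
  then have h: "B \<inter> z \<in> Rest z P" "x \<in> B \<inter> z" "y \<in> B \<inter> z" using a unfolding Rest_def by auto
  show "same (Rest z P) x y" unfolding same_def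
    by (rule bexI[where x="B \<inter> z"]) (use h in auto)
qed

lemma part_eq_blocks: "partition_on z R \<Longrightarrow> R = (\<lambda>x. {y\<in>z. same R x y}) ` z"
proof -
  assume p: "partition_on z R"
  show ?thesis
  proof (intro set_eqI iffI)
    fix B assume "B \<in> R"
    then obtain x where x: "x \<in> B" using p unfolding partition_on_def by (metis all_not_in_conv)
    have xz: "x \<in> z" using p \<open>B \<in> R\<close> x unfolding partition_on_def by blast
    have "B = {y\<in>z. same R x y}"
      using p \<open>B \<in> R\<close> x same_block[OF p] unfolding same_def partition_on_def by blast
    then show "B \<in> (\<lambda>x. {y\<in>z. same R x y}) ` z" using xz by blast
  next
    fix B assume "B \<in> (\<lambda>x. {y\<in>z. same R x y}) ` z"
    then obtain x where xz: "x \<in> z" and B: "B = {y\<in>z. same R x y}" by blast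
    obtain C where C: "C \<in> R" "x \<in> C" using p xz unfolding partition_on_def by blast
    have "C = B" using p C same_block[OF p] unfolding B same_def partition_on_def by blast
    then show "B \<in> R" using C by simp
  qed
qed

lemma part_eqI: "partition_on z R \<Longrightarrow> partition_on z R' \<Longrightarrow>
   (\<And>x y. x \<in> z \<Longrightarrow> y \<in> z \<Longrightarrow> same R x y \<longleftrightarrow> same R' x y) \<Longrightarrow> R = R'"
proof -
  assume a: "partition_on z R" "partition_on z R'" and e: "\<And>x y. x \<in> z \<Longrightarrow> y \<in> z \<Longrightarrow> same R x y \<longleftrightarrow> same R' x y"
  have "(\<lambda>x. {y\<in>z. same R x y}) ` z = (\<lambda>x. {y\<in>z. same R' x y}) ` z"
    using e by (intro image_cong refl) auto
  then show ?thesis using part_eq_blocks[OF a(1)] part_eq_blocks[OF a(2)] by simp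
qed

lemma finite_Parts: "finite z \<Longrightarrow> finite (Parts z)"
proof -
  assume "finite z"
  have "Parts z \<subseteq> Pow (Pow z)" unfolding Parts_def partition_on_def by auto
  then show ?thesis using \<open>finite z\<close> finite_subset by blast
qed



lemma space_part: "space (part_measure A X) = X"
  unfolding part_measure_def by (simp add: space_measure_of_conv)

lemma sets_part: "sets (part_measure A X) =
   sigma_sets X {{P \<in> X. Rest z P \<in> E} | z E. finite z \<and> z \<subseteq> A \<and> E \<subseteq> Parts z}"
  unfolding part_measure_def by (rule sets_measure_of) auto

lemma gen_part: "finite z \<Longrightarrow> z \<subseteq> A \<Longrightarrow> E \<subseteq> Parts z \<Longrightarrow>
   {P \<in> X. Rest z P \<in> E} \<in> sets (part_measure A X)"
  unfolding sets_part by (rule sigma_sets.Basic) blast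

lemma same_part: assumes "X \<subseteq> Parts A" "q \<in> A" "q' \<in> A"
  shows "{P \<in> X. same P q q'} \<in> sets (part_measure A X)"
proof -
  have "{P \<in> X. same P q q'} = {P \<in> X. Rest {q,q'} P \<in> {R \<in> Parts {q,q'}. same R q q'}}"
  proof (intro set_eqI iffI)
    fix P assume P: "P \<in> {P \<in> X. same P q q'}"
    then have "partition_on A P" using assms(1) Parts_iff by blast
    then have "Rest {q,q'} P \<in> Parts {q,q'}" using Rest_part[of A P "{q,q'}"] assms Parts_iff by blast
    then show "P \<in> {P \<in> X. Rest {q,q'} P \<in> {R \<in> Parts {q,q'}. same R q q'}}"
      using P same_Rest[of q "{q,q'}" q' P] by blast
  next
    fix P assume "P \<in> {P \<in> X. Rest {q,q'} P \<in> {R \<in> Parts {q,q'}. same R q q'}}"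
    then show "P \<in> {P \<in> X. same P q q'}" using same_Rest[of q "{q,q'}" q' P] by blast
  qed
  also have "\<dots> \<in> sets (part_measure A X)"
    by (rule gen_part) (use assms in auto)
  finally show ?thesis .
qed

lemma space_P_Q: "space P_Q = Parts Qplus"
  unfolding P_Q_def by (rule space_part)

lemma space_P_loc: "space P_loc = Ploc_set"
  unfolding P_loc_def by (rule space_part)

section \<open>Two-point partitions\<close>

lemma Parts_two: assumes "a \<noteq> b"
  shows "Parts {a,b} = {{{a,b}}, {{a},{b}}}"
proof (intro set_eqI iffI)
  fix P assume "P \<in> Parts {a,b}"
  then have p: "partition_on {a,b} P" by (simp add: Parts_iff)
  have e: "P = (\<lambda>x. {y\<in>{a,b}. same P x y}) ` {a,b}" by (rule part_eq_blocks[OF p])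
  have aa: "same P a a" "same P b b" using same_refl[OF p] by auto
  show "P \<in> {{{a,b}}, {{a},{b}}}"
  proof (cases "same P a b")
    case True
    then have "same P b a" by (rule same_sym)
    then have "{y\<in>{a,b}. same P a y} = {a,b}" "{y\<in>{a,b}. same P b y} = {a,b}"
      using True aa by auto
    then have "P = {{a,b}}" using e by simp
    then show ?thesis by simp
  next
    case False
    then have "\<not> same P b a" using same_sym by metis
    then have "{y\<in>{a,b}. same P a y} = {a}" "{y\<in>{a,b}. same P b y} = {b}"
      using False aa by auto
    then have "P = {{a},{b}}" using e by simp
    then show ?thesis by simp
  qed
next
  fix P assume "P \<in> {{{a,b}}, {{a},{b}}}"
  then show "P \<in> Parts {a,b}"
  proof
    assume "P = {{a,b}}"
    then show ?thesis by (simp add: Parts_iff partition_on_space)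
  next
    assume "P \<in> {{{a},{b}}}"
    then have "P = (\<lambda>x. {x}) ` {a,b}" by auto
    moreover have "partition_on {a,b} ((\<lambda>x. {x}) ` {a,b})" by (rule partition_on_singletons)
    ultimately show ?thesis by (simp only: Parts_iff)
  qed
qed

lemma rate_TS: assumes "a < b"
  shows "arg_rate \<rho> {{a,b}} {{a},{b}} = \<rho> * real_of_rat (b - a)"
proof -
  have m: "\<not> merge_step {{a,b}} {{a},{b}}" unfolding merge_step_def by auto
  have st: "split_triples {{a,b}} {{a},{b}} = {({a,b}, a, b)}"
  proof (intro set_eqI iffI)
    fix t assume "t \<in> split_triples {{a,b}} {{a},{b}}"
    then obtain B x y where t: "t = (B,x,y)" "B = {a,b}" "x \<in> B" "y \<in> B" "x < y"
      unfolding split_triples_def by auto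
    then have "x = a" "y = b" using assms by auto
    then show "t \<in> {({a,b}, a, b)}" using t by simp
  next
    fix t assume "t \<in> {({a,b}, a, b)}"
    then have t: "t = ({a,b}, a, b)" by simp
    have "{c \<in> {a,b}. c \<le> a} = {a}" "{c \<in> {a,b}. b \<le> c} = {b}" using assms by auto
    then have "split_at {{a,b}} {a,b} a b = {{a},{b}}" unfolding split_at_def by auto
    moreover have "\<not> (\<exists>c\<in>{a,b}. a < c \<and> c < b)" by auto
    ultimately show "t \<in> split_triples {{a,b}} {{a},{b}}"
      unfolding split_triples_def t using assms by auto
  qed
  show ?thesis unfolding arg_rate_def using m st by simp
qed

lemma rate_ST: assumes "a < b"
  shows "arg_rate \<rho> {{a},{b}} {{a,b}} = 1"
proof -
  have ab: "{a} \<noteq> {b}" using assms by auto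
  have m: "merge_step {{a},{b}} {{a,b}}" unfolding merge_step_def
  proof (intro bexI conjI)
    show "{{a, b}} = insert ({a} \<union> {b}) ({{a}, {b}} - {{a}, {b}})" by auto
  qed (use ab in auto)
  have st: "split_triples {{a},{b}} {{a,b}} = {}"
    unfolding split_triples_def by auto
  show ?thesis unfolding arg_rate_def using m st by simp
qed



lemma inv_two:
  fixes a b :: rat
  assumes ab: "a < b" and inv: "arg_invariant \<rho> {a,b} M"
  defines "c \<equiv> \<rho> * real_of_rat (b - a)"
  shows "measure M {{{a},{b}}} = c / (1 + c) \<and> measure M {{{a,b}}} = 1 / (1 + c)"
proof -
  define T where "T = {{a,b}}"
  define S where "S = {{a},{b}}"
  have TS: "T \<noteq> S" unfolding T_def S_def using ab by (auto simp: doubleton_eq_iff)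
  have PP: "Parts {a,b} = {T, S}" unfolding T_def S_def using ab by (simp add: Parts_two)
  have ps: "prob_space M" and sp: "space M = {T,S}" and st: "sets M = Pow {T,S}"
    using inv PP unfolding arg_invariant_def by auto
  have bal: "(\<Sum>x\<in>{T,S} - {S}. measure M {x} * arg_rate \<rho> x S) =
                   measure M {S} * (\<Sum>x\<in>{T,S} - {S}. arg_rate \<rho> S x)"
    using inv PP unfolding arg_invariant_def by auto
  have d: "{T,S} - {S} = {T}" using TS by auto
  have rTS: "arg_rate \<rho> T S = c" unfolding T_def S_def c_def using rate_TS[OF ab] by simp
  have rST: "arg_rate \<rho> S T = 1" unfolding T_def S_def using rate_ST[OF ab] by simp
  have e1: "measure M {T} * c = measure M {S}" using bal unfolding d by (simp add: rTS rST)
  interpret prob_space M by (rule ps)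
  have "measure M {T,S} = (\<Sum>x\<in>{T,S}. measure M {x})"
    by (rule finite_measure_eq_sum_singleton) (auto simp: st)
  then have e2: "measure M {T} + measure M {S} = 1" using TS prob_space sp by simp
  have c0: "1 + c \<noteq> 0"
  proof -
    have "0 \<le> measure M {T}" "0 \<le> measure M {S}" by auto
    show ?thesis
    proof
      assume "1 + c = 0"
      then have "c = -1" by simp
      then show False using e1 e2 \<open>0 \<le> measure M {T}\<close> \<open>0 \<le> measure M {S}\<close> by simp
    qed
  qed
  have mT: "measure M {T} = 1 / (1 + c)"
  proof -
    have "measure M {T} * (1 + c) = 1" using e1 e2 by (simp add: algebra_simps)
    then show ?thesis using c0 by (simp add: field_simps)
  qed
  have mS: "measure M {S} = c / (1 + c)" using e1 mT by simp
  show ?thesis using mT mS unfolding T_def S_def by simp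
qed

lemma mu_two:
  fixes a b :: rat
  assumes ab: "a < b" and rho: "\<rho> \<ge> 0"
  defines "c \<equiv> \<rho> * real_of_rat (b - a)"
  shows "arg_invariant \<rho> {a,b} (mu_rz \<rho> {a,b}) \<and> measure (mu_rz \<rho> {a,b}) {{{a},{b}}} = c / (1 + c)"
proof -
  define T where "T = {{a,b}}"
  define S where "S = {{a},{b}}"
  have TS: "T \<noteq> S" unfolding T_def S_def using ab by (auto simp: doubleton_eq_iff)
  have PP: "Parts {a,b} = {T, S}" unfolding T_def S_def using ab by (simp add: Parts_two)
  have c0: "c \<ge> 0" unfolding c_def using ab rho by simp
  define f where "f x = (if x = S then ennreal (c / (1 + c)) else ennreal (1 / (1 + c)))" for x
  define M0 where "M0 = point_measure {T,S} f"
  have sM0: "sets M0 = Pow {T,S}" unfolding M0_def by (simp add: sets_point_measure)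
  have spM0: "space M0 = {T,S}" unfolding M0_def by (simp add: space_point_measure)
  have eM0: "emeasure M0 X = (\<Sum>a\<in>X. f a)" if "X \<subseteq> {T,S}" for X
    unfolding M0_def by (rule emeasure_point_measure_finite) (use that in auto)
  have fS: "f S = ennreal (c / (1 + c))" and fT: "f T = ennreal (1 / (1 + c))"
    unfolding f_def using TS by auto
  have ps0: "prob_space M0"
  proof
    have "emeasure M0 (space M0) = f T + f S" unfolding spM0 using eM0[of "{T,S}"] TS by simp
    also have "\<dots> = ennreal (1/(1+c) + c/(1+c))" unfolding fS fT using c0
      by (subst ennreal_plus) auto
    also have "1/(1+c) + c/(1+c) = 1" using c0 by (simp add: field_simps)
    finally show "emeasure M0 (space M0) = 1" by simp
  qed
  have mS0: "measure M0 {S} = c / (1 + c)"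
    unfolding measure_def using eM0[of "{S}"] fS c0 by simp
  have mT0: "measure M0 {T} = 1 / (1 + c)"
    unfolding measure_def using eM0[of "{T}"] fT c0 by simp
  have rTS: "arg_rate \<rho> T S = c" unfolding T_def S_def c_def using rate_TS[OF ab] by simp
  have rST: "arg_rate \<rho> S T = 1" unfolding T_def S_def using rate_ST[OF ab] by simp
  have dS: "{T,S} - {S} = {T}" and dT: "{T,S} - {T} = {S}" using TS by auto
  have inv0: "arg_invariant \<rho> {a,b} M0"
    unfolding arg_invariant_def PP
  proof (intro conjI ps0 spM0 sM0 ballI)
    fix y assume "y \<in> {T,S}"
    then show "(\<Sum>x\<in>{T, S} - {y}. measure M0 {x} * arg_rate \<rho> x y) =
          measure M0 {y} * (\<Sum>x\<in>{T, S} - {y}. arg_rate \<rho> y x)"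
    proof
      assume y: "y = T"
      show ?thesis unfolding y dT using mS0 mT0 rTS rST by simp
    next
      assume "y \<in> {S}"
      then have y: "y = S" by simp
      show ?thesis unfolding y dS using mS0 mT0 rTS rST by simp
    qed
  qed
  have uniq: "M = M0" if "arg_invariant \<rho> {a,b} M" for M
  proof -
    have i: "measure M {S} = c / (1 + c) \<and> measure M {T} = 1 / (1 + c)"
      using inv_two[OF ab that] unfolding S_def T_def c_def by simp
    have ps: "prob_space M" and st: "sets M = Pow {T,S}"
      using that PP unfolding arg_invariant_def by auto
    interpret prob_space M by (rule ps)
    show ?thesis
    proof (rule measure_eqI_finite[OF st sM0])
      fix x assume "x \<in> {T,S}"
      then have "x = T \<or> x = S" by auto
      then show "emeasure M {x} = emeasure M0 {x}"
        using i mS0 mT0 eM0[of "{S}"] eM0[of "{T}"] fS fT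
        by (auto simp: emeasure_eq_measure)
    qed simp
  qed
  have ex1: "\<exists>!M. arg_invariant \<rho> {a,b} M" using inv0 uniq by blast
  have "arg_invariant \<rho> {a,b} (mu_rz \<rho> {a,b})" unfolding mu_rz_def by (rule theI'[OF ex1])
  moreover then have "mu_rz \<rho> {a,b} = M0" by (rule uniq)
  ultimately show ?thesis using mS0 unfolding S_def by simp
qed



definition nxt :: "'a::linorder set \<Rightarrow> 'a \<Rightarrow> 'a" where
  "nxt S a = Min {b\<in>S. a < b}"

definition cntD :: "'a set set \<Rightarrow> 'a::linorder set \<Rightarrow> 'a set" where
  "cntD P S = {a\<in>S. (\<exists>b\<in>S. a < b) \<and> \<not> same P a (nxt S a)}"

definition cnt :: "'a set set \<Rightarrow> 'a::linorder set \<Rightarrow> nat" where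
  "cnt P S = card (cntD P S)"

lemma nxt_props:
  assumes "finite S" "b \<in> S" "a < b"
  shows "nxt S a \<in> S" "a < nxt S a" "\<And>c. c \<in> S \<Longrightarrow> a < c \<Longrightarrow> nxt S a \<le> c"
proof -
  have f: "finite {b\<in>S. a < b}" using assms(1) by simp
  have ne: "{b\<in>S. a < b} \<noteq> {}" using assms by auto
  have "nxt S a \<in> {b\<in>S. a < b}" unfolding nxt_def using Min_in[OF f ne] .
  then show "nxt S a \<in> S" "a < nxt S a" by auto
  show "\<And>c. c \<in> S \<Longrightarrow> a < c \<Longrightarrow> nxt S a \<le> c" unfolding nxt_def using f by (intro Min_le) auto
qed

lemma nxt_insert_below:
  assumes "\<forall>t\<in>T. r < t" "a \<in> T"
  shows "nxt (insert r T) a = nxt T a"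
proof -
  have "{b\<in>insert r T. a < b} = {b\<in>T. a < b}" using assms by auto
  then show ?thesis unfolding nxt_def by simp
qed

lemma nxt_insert_min:
  assumes "finite T" "T \<noteq> {}" "\<forall>t\<in>T. r < t"
  shows "nxt (insert r T) r = Min T"
proof -
  have "{b\<in>insert r T. r < b} = T" using assms by auto
  then show ?thesis unfolding nxt_def by simp
qed

lemma cnt_bottom:
  assumes "finite T" "T \<noteq> {}" "\<forall>t\<in>T. r < t"
  shows "cnt P (insert r T) = cnt P T + (if same P r (Min T) then 0 else 1)"
proof -
  have rT: "r \<notin> T" using assms by auto
  have D: "cntD P (insert r T) = cntD P T \<union> (if same P r (Min T) then {} else {r})"
  proof (intro set_eqI iffI)
    fix a assume a: "a \<in> cntD P (insert r T)"
    show "a \<in> cntD P T \<union> (if same P r (Min T) then {} else {r})"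
    proof (cases "a = r")
      case True
      then show ?thesis using a nxt_insert_min[OF assms] unfolding cntD_def by auto
    next
      case False
      then have aT: "a \<in> T" using a unfolding cntD_def by auto
      have "\<exists>b\<in>T. a < b" using a aT assms(3) False unfolding cntD_def by auto
      then show ?thesis using a aT nxt_insert_below[OF assms(3) aT] unfolding cntD_def by auto
    qed
  next
    fix a assume a: "a \<in> cntD P T \<union> (if same P r (Min T) then {} else {r})"
    show "a \<in> cntD P (insert r T)"
    proof (cases "a = r")
      case True
      then have "\<not> same P r (Min T)" using a rT unfolding cntD_def by (auto split: if_splits)
      moreover obtain t where "t \<in> T" using assms(2) by auto
      ultimately show ?thesis using True nxt_insert_min[OF assms] assms(3) unfolding cntD_def by auto
    next
      case False
      then have aT: "a \<in> cntD P T" using a by (auto split: if_splits)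
      then have "a \<in> T" unfolding cntD_def by auto
      then show ?thesis using aT nxt_insert_below[OF assms(3)] unfolding cntD_def by auto
    qed
  qed
  have fin: "finite (cntD P T)" using assms(1) unfolding cntD_def by simp
  have "r \<notin> cntD P T" using rT unfolding cntD_def by auto
  then show ?thesis unfolding cnt_def D using fin by auto
qed

lemma cnt_insert_mono:
  assumes p: "partition_on A P" and fS: "finite S" and SA: "S \<subseteq> A" and cA: "c \<in> A"
  shows "cnt P S \<le> cnt P (insert c S)"
proof (cases "c \<in> S")
  case True
  then show ?thesis by (simp add: insert_absorb)
next
  case cS: False
  define T where "T = insert c S"
  have fT: "finite T" unfolding T_def using fS by simp
  define f where "f a = (if a < c \<and> c < nxt S a \<and> same P a c then c else a)" for a
  have maps: "f a \<in> cntD P T" if aD: "a \<in> cntD P S" for a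
  proof -
    have aS: "a \<in> S" and exb: "\<exists>b\<in>S. a < b" and ns: "\<not> same P a (nxt S a)"
      using aD unfolding cntD_def by auto
    obtain b where b: "b \<in> S" "a < b" using exb by blast
    have n1: "nxt S a \<in> S" "a < nxt S a" and n3: "\<And>d. d \<in> S \<Longrightarrow> a < d \<Longrightarrow> nxt S a \<le> d"
      using nxt_props[OF fS b] by auto
    show ?thesis
    proof (cases "a < c \<and> c < nxt S a")
      case True
      have nT: "nxt T a = c"
      proof -
        have cin: "c \<in> T" "a < c" unfolding T_def using True by auto
        have "nxt T a \<le> c" using nxt_props(3)[OF fT cin cin] .
        moreover have "nxt T a \<in> T" "a < nxt T a" using nxt_props[OF fT cin] by auto
        moreover have "c \<le> nxt T a"
        proof (rule ccontr)
          assume "\<not> c \<le> nxt T a"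
          then have "nxt T a < c" by simp
          moreover have "nxt T a \<in> S" using \<open>nxt T a \<in> T\<close> \<open>nxt T a \<le> c\<close> \<open>nxt T a < c\<close>
            unfolding T_def by auto
          ultimately show False using n3 \<open>a < nxt T a\<close> True by fastforce
        qed
        ultimately show ?thesis by simp
      qed
      show ?thesis
      proof (cases "same P a c")
        case True2: True
        have fa: "f a = c" unfolding f_def using True True2 by simp
        have "\<not> same P c (nxt S a)"
        proof
          assume "same P c (nxt S a)"
          then have "same P a (nxt S a)" using same_trans[OF p True2] by blast
          then show False using ns by simp
        qed
        moreover have "nxt T c = nxt S a"
        proof -
          have nin: "nxt S a \<in> T" "c < nxt S a" unfolding T_def using n1 True by auto
          have "nxt T c \<le> nxt S a" using nxt_props(3)[OF fT nin nin] .
          moreover have "nxt T c \<in> T" "c < nxt T c" using nxt_props[OF fT nin] by auto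
          moreover have "nxt S a \<le> nxt T c"
          proof -
            have "nxt T c \<in> S" using \<open>nxt T c \<in> T\<close> \<open>c < nxt T c\<close> unfolding T_def by auto
            moreover have "a < nxt T c" using True \<open>c < nxt T c\<close> less_trans by blast
            ultimately show ?thesis using n3 by simp
          qed
          ultimately show ?thesis by simp
        qed
        moreover have "c \<in> T" "nxt S a \<in> T" "c < nxt S a" unfolding T_def using n1 True by auto
        ultimately show ?thesis unfolding fa cntD_def by auto
      next
        case False2: False
        have fa: "f a = a" unfolding f_def using False2 by simp
        have "c \<in> T" "a < c" "a \<in> T" unfolding T_def using True aS by auto
        then show ?thesis unfolding fa cntD_def using nT False2 by auto
      qed
    next
      case False
      have fa: "f a = a" unfolding f_def using False by auto
      have nT: "nxt T a = nxt S a"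
      proof -
        have nin: "nxt S a \<in> T" unfolding T_def using n1 by auto
        have "nxt T a \<le> nxt S a" using nxt_props(3)[OF fT nin n1(2) nin n1(2)] .
        moreover have "nxt T a \<in> T" "a < nxt T a" using nxt_props[OF fT nin n1(2)] by auto
        moreover have "nxt S a \<le> nxt T a"
        proof (cases "nxt T a = c")
          case True
          then show ?thesis using False \<open>a < nxt T a\<close> \<open>nxt T a \<le> nxt S a\<close> by auto
        next
          case False
          then have "nxt T a \<in> S" using \<open>nxt T a \<in> T\<close> unfolding T_def by auto
          then show ?thesis using n3 \<open>a < nxt T a\<close> by simp
        qed
        ultimately show ?thesis by simp
      qed
      have "a \<in> T" "nxt S a \<in> T" unfolding T_def using aS n1 by auto
      then show ?thesis unfolding fa cntD_def using nT ns n1 by auto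
    qed
  qed
  have inj: "inj_on f (cntD P S)"
  proof (rule inj_onI)
    fix a a' assume aD: "a \<in> cntD P S" and aD': "a' \<in> cntD P S" and eq: "f a = f a'"
    have aS: "a \<in> S" "a' \<in> S" using aD aD' unfolding cntD_def by auto
    show "a = a'"
    proof (cases "f a = c")
      case True
      then have ca: "a < c \<and> c < nxt S a" "a' < c \<and> c < nxt S a'"
        using eq aS cS unfolding f_def by (auto split: if_splits)
      show ?thesis
      proof (rule ccontr)
        assume "a \<noteq> a'"
        then have "a < a' \<or> a' < a" by auto
        then show False
        proof
          assume "a < a'"
          then have "nxt S a \<le> a'" using nxt_props(3)[OF fS aS(2) \<open>a < a'\<close> aS(2)] by simp
          then show False using ca less_le_trans[of c "nxt S a" a'] by auto
        next
          assume "a' < a"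
          then have "nxt S a' \<le> a" using nxt_props(3)[OF fS aS(1) \<open>a' < a\<close> aS(1)] by simp
          then show False using ca less_le_trans[of c "nxt S a'" a] by auto
        qed
      qed
    next
      case False
      then have "f a = a" "f a' = a'" using eq unfolding f_def by (auto split: if_splits)
      then show ?thesis using eq by metis
    qed
  qed
  have "card (cntD P S) \<le> card (cntD P T)"
    by (rule card_inj_on_le[OF inj]) (use maps fT in \<open>auto simp: cntD_def\<close>)
  then show ?thesis unfolding cnt_def T_def by simp
qed

lemma cnt_mono:
  assumes p: "partition_on A P" and fT: "finite T" and ST: "S \<subseteq> T" and TA: "T \<subseteq> A"
  shows "cnt P S \<le> cnt P T"
proof -
  have "finite (T - S)" using fT by simp
  have "\<forall>D. finite D \<longrightarrow> D \<subseteq> T - S \<longrightarrow> cnt P S \<le> cnt P (S \<union> D)"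
  proof (intro allI impI)
    fix D :: "'a set" assume "finite D" "D \<subseteq> T - S"
    then show "cnt P S \<le> cnt P (S \<union> D)"
    proof (induction D rule: finite_induct)
      case empty
      then show ?case by simp
    next
      case (insert c D)
      have "cnt P S \<le> cnt P (S \<union> D)" using insert by auto
      also have "\<dots> \<le> cnt P (insert c (S \<union> D))"
        by (rule cnt_insert_mono[OF p]) (use insert fT ST TA finite_subset in auto)
      finally show ?case by simp
    qed
  qed
  then have "cnt P S \<le> cnt P (S \<union> (T - S))" using \<open>finite (T - S)\<close> by blast
  then show ?thesis using ST by (simp add: Un_absorb1)
qed

lemma telescope:
  fixes F :: "'a::linordered_idom set"
  assumes "finite F" "F \<noteq> {}"
  shows "(\<Sum>a\<in>{a\<in>F. \<exists>b\<in>F. a < b}. nxt F a - a) = Max F - Min F"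
  using assms
proof (induction F rule: finite_linorder_min_induct)
  case empty
  then show ?case by simp
next
  case (insert r T)
  show ?case
  proof (cases "T = {}")
    case True
    then have e0: "{a\<in>insert r T. \<exists>b\<in>insert r T. a < b} = {}" by auto
    show ?thesis unfolding e0 using True by simp
  next
    case False
    have e: "{a\<in>insert r T. \<exists>b\<in>insert r T. a < b} = insert r {a\<in>T. \<exists>b\<in>T. a < b}"
      using insert False by auto
    have rn: "r \<notin> {a\<in>T. \<exists>b\<in>T. a < b}" using insert by auto
    have "(\<Sum>a\<in>{a\<in>insert r T. \<exists>b\<in>insert r T. a < b}. nxt (insert r T) a - a)
        = (nxt (insert r T) r - r) + (\<Sum>a\<in>{a\<in>T. \<exists>b\<in>T. a < b}. nxt (insert r T) a - a)"
      unfolding e using rn insert by simp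
    also have "(\<Sum>a\<in>{a\<in>T. \<exists>b\<in>T. a < b}. nxt (insert r T) a - a) = (\<Sum>a\<in>{a\<in>T. \<exists>b\<in>T. a < b}. nxt T a - a)"
      using nxt_insert_below[OF insert(2)] by (intro sum.cong) auto
    also have "\<dots> = Max T - Min T" using insert False by simp
    also have "nxt (insert r T) r = Min T" using nxt_insert_min[OF insert(1) False insert(2)] .
    finally have "(\<Sum>a\<in>{a\<in>insert r T. \<exists>b\<in>insert r T. a < b}. nxt (insert r T) a - a) = Max T - r"
      by simp
    moreover have "Max (insert r T) = Max T"
    proof -
      have "Max T \<in> T" using Max_in[OF insert(1) False] .
      then have "r < Max T" using insert(2) by blast
      then show ?thesis using Max_insert[OF insert(1) False, of r] by simp
    qed
    moreover have "Min (insert r T) = r"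
    proof -
      have "Min T \<in> T" using Min_in[OF insert(1) False] .
      then have "r < Min T" using insert(2) by blast
      then show ?thesis using Min_insert[OF insert(1) False, of r] by simp
    qed
    ultimately show ?thesis by simp
  qed
qed



locale setting =
  fixes \<rho> :: real and mubar :: "rat set set measure"
  assumes rho: "\<rho> > 0" and ps: "prob_space mubar" and st: "sets mubar = sets P_Q"
    and h5: "\<And>z. finite z \<Longrightarrow> z \<subseteq> Qplus \<Longrightarrow>
           distr mubar (count_space (Parts z)) (Rest z) = mu_rz \<rho> z"
begin

lemma sp: "space mubar = Parts Qplus"
  using sets_eq_imp_space_eq[OF st] space_P_Q by simp

lemma gen_mu: "finite z \<Longrightarrow> z \<subseteq> Qplus \<Longrightarrow> E \<subseteq> Parts z \<Longrightarrow>
   {P \<in> space mubar. Rest z P \<in> E} \<in> sets mubar"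
  unfolding st sp P_Q_def by (rule gen_part)

lemma same_mu: "q \<in> Qplus \<Longrightarrow> q' \<in> Qplus \<Longrightarrow> {P \<in> space mubar. same P q q'} \<in> sets mubar"
  unfolding st sp P_Q_def by (rule same_part) auto

lemma sep_mu: "q \<in> Qplus \<Longrightarrow> q' \<in> Qplus \<Longrightarrow> {P \<in> space mubar. \<not> same P q q'} \<in> sets mubar"
proof -
  assume a: "q \<in> Qplus" "q' \<in> Qplus"
  have "{P \<in> space mubar. \<not> same P q q'} = space mubar - {P \<in> space mubar. same P q q'}" by auto
  then show ?thesis using same_mu[OF a] by auto
qed

lemma Rest_meas: assumes "finite z" "z \<subseteq> Qplus"
  shows "Rest z \<in> measurable mubar (count_space (Parts z))"
proof (rule measurableI)
  fix P assume "P \<in> space mubar"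
  then have "partition_on Qplus P" using sp Parts_iff by blast
  then show "Rest z P \<in> space (count_space (Parts z))"
    using Rest_part[OF _ assms(2)] Parts_iff by auto
next
  fix E assume "E \<in> sets (count_space (Parts z))"
  then have "E \<subseteq> Parts z" by simp
  have "Rest z -` E \<inter> space mubar = {P \<in> space mubar. Rest z P \<in> E}" by auto
  then show "Rest z -` E \<inter> space mubar \<in> sets mubar" using gen_mu[OF assms \<open>E \<subseteq> Parts z\<close>] by simp
qed

lemma sep_prob:
  assumes ab: "a < b" and aQ: "a \<in> Qplus" and bQ: "b \<in> Qplus"
  shows "emeasure mubar {P \<in> space mubar. \<not> same P a b} \<le> ennreal (\<rho> * real_of_rat (b - a))"
proof -
  define z where "z = {a,b}"
  define T where "T = {{a,b}}"
  define S where "S = {{a},{b}}"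
  define c where "c = \<rho> * real_of_rat (b - a)"
  have c0: "c \<ge> 0" unfolding c_def using rho ab by simp
  have fz: "finite z" "z \<subseteq> Qplus" unfolding z_def using aQ bQ by auto
  have PP: "Parts z = {T, S}" unfolding T_def S_def z_def using ab by (simp add: Parts_two)
  have pre: "Rest z -` {S} \<inter> space mubar = {P \<in> space mubar. \<not> same P a b}"
  proof (intro set_eqI iffI)
    fix P assume P: "P \<in> Rest z -` {S} \<inter> space mubar"
    then have "Rest z P = S" by simp
    moreover have "\<not> same S a b" unfolding S_def same_def using ab by auto
    ultimately have "\<not> same P a b" using same_Rest[of a z b P] unfolding z_def by auto
    then show "P \<in> {P \<in> space mubar. \<not> same P a b}" using P by simp
  next
    fix P assume P: "P \<in> {P \<in> space mubar. \<not> same P a b}"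
    then have "partition_on Qplus P" using sp Parts_iff by blast
    then have "Rest z P \<in> Parts z" using Rest_part[OF _ fz(2)] Parts_iff by auto
    moreover have "Rest z P \<noteq> T"
    proof
      assume "Rest z P = T"
      moreover have "same T a b" unfolding T_def same_def by auto
      ultimately have "same P a b" using same_Rest[of a z b P] unfolding z_def by auto
      then show False using P by simp
    qed
    ultimately have "Rest z P = S" using PP by auto
    then show "P \<in> Rest z -` {S} \<inter> space mubar" using P by simp
  qed
  have Sin: "{S} \<in> sets (count_space (Parts z))" using PP by simp
  have "emeasure mubar {P \<in> space mubar. \<not> same P a b} = emeasure (distr mubar (count_space (Parts z)) (Rest z)) {S}"
    using emeasure_distr[OF Rest_meas[OF fz] , of "{S}"] Sin pre by simp
  also have "\<dots> = emeasure (mu_rz \<rho> z) {S}" using h5[OF fz] by simp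
  also have "\<dots> = ennreal (c / (1 + c))"
  proof -
    have m: "arg_invariant \<rho> {a,b} (mu_rz \<rho> {a,b})" "measure (mu_rz \<rho> {a,b}) {{{a},{b}}} = c / (1 + c)"
      using mu_two[OF ab, of \<rho>] rho unfolding c_def by auto
    then have "prob_space (mu_rz \<rho> {a,b})" unfolding arg_invariant_def by simp
    then interpret p: prob_space "mu_rz \<rho> {a,b}" .
    show ?thesis using m(2) unfolding z_def S_def by (simp add: p.emeasure_eq_measure)
  qed
  also have "\<dots> \<le> ennreal c"
  proof (rule ennreal_leI)
    have "c / (1 + c) \<le> c / 1" using c0 by (intro divide_left_mono) auto
    then show "c / (1 + c) \<le> c" by simp
  qed
  finally show ?thesis unfolding c_def .
qed

definition hF :: "rat set \<Rightarrow> rat set set \<Rightarrow> ennreal" where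
  "hF F P = (\<Sum>a\<in>{a\<in>F. \<exists>b\<in>F. a < b}. indicator {P \<in> space mubar. \<not> same P a (nxt F a)} P)"

lemma hF_eq: "finite F \<Longrightarrow> hF F P = of_nat (cnt P F)" if "P \<in> space mubar"
proof -
  assume fF: "finite F"
  let ?F' = "{a\<in>F. \<exists>b\<in>F. a < b}"
  have "hF F P = (\<Sum>a\<in>?F'. if \<not> same P a (nxt F a) then 1 else 0)"
    unfolding hF_def using that by (intro sum.cong) (auto simp: indicator_def)
  also have "\<dots> = (\<Sum>a\<in>{a\<in>?F'. \<not> same P a (nxt F a)}. 1)"
    using fF by (subst sum.inter_filter) auto
  also have "\<dots> = of_nat (card {a\<in>?F'. \<not> same P a (nxt F a)})" by simp
  also have "{a\<in>?F'. \<not> same P a (nxt F a)} = cntD P F" unfolding cntD_def by auto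
  finally show ?thesis unfolding cnt_def .
qed

lemma hF_meas: "finite F \<Longrightarrow> F \<subseteq> Qplus \<Longrightarrow> hF F \<in> borel_measurable mubar"
proof -
  assume fF: "finite F" "F \<subseteq> Qplus"
  have m: "{P \<in> space mubar. \<not> same P a (nxt F a)} \<in> sets mubar" if aa: "a \<in> {a\<in>F. \<exists>b\<in>F. a < b}" for a
  proof -
    obtain b where "b \<in> F" "a < b" using aa by blast
    then have "nxt F a \<in> F" using nxt_props(1)[OF fF(1)] by blast
    then show ?thesis using sep_mu that fF by auto
  qed
  show ?thesis unfolding hF_def[abs_def]
    by (intro borel_measurable_sum borel_measurable_indicator m)
qed

lemma hF_int: assumes fF: "finite F" "F \<subseteq> Qplus" "F \<noteq> {}"
  shows "(\<integral>\<^sup>+P. hF F P \<partial>mubar) \<le> ennreal (\<rho> * real_of_rat (Max F - Min F))"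
proof -
  let ?F' = "{a\<in>F. \<exists>b\<in>F. a < b}"
  have nx: "nxt F a \<in> F \<and> a < nxt F a" if aa: "a \<in> ?F'" for a
  proof -
    obtain b where "b \<in> F" "a < b" using aa by blast
    then show ?thesis using nxt_props[OF fF(1)] by blast
  qed
  have m: "{P \<in> space mubar. \<not> same P a (nxt F a)} \<in> sets mubar" if "a \<in> ?F'" for a
    using sep_mu nx[OF that] that fF by auto
  have "(\<integral>\<^sup>+P. hF F P \<partial>mubar) = (\<Sum>a\<in>?F'. emeasure mubar {P \<in> space mubar. \<not> same P a (nxt F a)})"
    unfolding hF_def using m by (subst nn_integral_sum) (auto intro: borel_measurable_indicator)
  also have "\<dots> \<le> (\<Sum>a\<in>?F'. ennreal (\<rho> * real_of_rat (nxt F a - a)))"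
  proof (rule sum_mono)
    fix a assume a: "a \<in> ?F'"
    show "emeasure mubar {P \<in> space mubar. \<not> same P a (nxt F a)} \<le> ennreal (\<rho> * real_of_rat (nxt F a - a))"
      using sep_prob[of a "nxt F a"] nx[OF a] a fF by auto
  qed
  also have "\<dots> = ennreal (\<Sum>a\<in>?F'. \<rho> * real_of_rat (nxt F a - a))"
  proof (rule sum_ennreal)
    fix a assume a: "a \<in> ?F'"
    then have "0 < nxt F a - a" using nx by simp
    then have "0 \<le> real_of_rat (nxt F a - a)" by simp
    then show "0 \<le> \<rho> * real_of_rat (nxt F a - a)" using rho by simp
  qed
  also have "(\<Sum>a\<in>?F'. \<rho> * real_of_rat (nxt F a - a)) = \<rho> * real_of_rat (\<Sum>a\<in>?F'. nxt F a - a)"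
    by (simp add: sum_distrib_left of_rat_sum)
  also have "(\<Sum>a\<in>?F'. nxt F a - a) = Max F - Min F" using telescope[OF fF(1) fF(3)] .
  finally show ?thesis by simp
qed

end



definition Qn :: "nat \<Rightarrow> rat set" where "Qn n = {q\<in>Qplus. q \<le> of_nat n}"

definition bnd_cnt :: "rat set set \<Rightarrow> bool" where
  "bnd_cnt P \<longleftrightarrow> (\<forall>n::nat. \<exists>K::nat. \<forall>S. finite S \<and> S \<subseteq> Qn n \<longrightarrow> cnt P S \<le> K)"

context setting
begin

lemma AE_bnd_n: "AE P in mubar. \<exists>K::nat. \<forall>S. finite S \<and> S \<subseteq> Qn n \<longrightarrow> cnt P S \<le> K"
proof -
  define Q where "Q = Qn n"
  have "0 \<in> Q" unfolding Q_def Qn_def Qplus_def by simp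
  then have Qne: "Q \<noteq> {}" by blast
  have cQ: "countable Q" by simp
  have QQ: "Q \<subseteq> Qplus" unfolding Q_def Qn_def by auto
  define e where "e = from_nat_into Q"
  define F where "F k = e ` {..k}" for k
  have Fsub: "F k \<subseteq> Q" for k unfolding F_def e_def using from_nat_into[OF Qne] by auto
  have Ffin: "finite (F k)" for k unfolding F_def by simp
  have Fne: "F k \<noteq> {}" for k unfolding F_def by simp
  have FQ: "F k \<subseteq> Qplus" for k using Fsub QQ by blast
  have Fmono: "F k \<subseteq> F (Suc k)" for k unfolding F_def by auto
  define g where "g k = hF (F k)" for k
  have gm: "g k \<in> borel_measurable mubar" for k
    unfolding g_def by (rule hF_meas[OF Ffin FQ])
  have gmono: "AE P in mubar. g k P \<le> g (Suc k) P" for k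
  proof (rule AE_I2)
    fix P assume P: "P \<in> space mubar"
    then have p: "partition_on Qplus P" using sp Parts_iff by blast
    have "cnt P (F k) \<le> cnt P (F (Suc k))"
      by (rule cnt_mono[OF p Ffin Fmono FQ])
    then show "g k P \<le> g (Suc k) P" unfolding g_def using hF_eq[OF P] Ffin by simp
  qed
  have gint: "(\<integral>\<^sup>+P. g k P \<partial>mubar) \<le> ennreal (\<rho> * real n)" for k
  proof -
    have "(\<integral>\<^sup>+P. g k P \<partial>mubar) \<le> ennreal (\<rho> * real_of_rat (Max (F k) - Min (F k)))"
      unfolding g_def by (rule hF_int[OF Ffin FQ Fne])
    also have "\<dots> \<le> ennreal (\<rho> * real n)"
    proof (rule ennreal_leI)
      have "Max (F k) \<in> Q" "Min (F k) \<in> Q" using Max_in[OF Ffin Fne] Min_in[OF Ffin Fne] Fsub by auto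
      then have "Max (F k) - Min (F k) \<le> of_nat n" unfolding Q_def Qn_def Qplus_def by auto
      then have "real_of_rat (Max (F k) - Min (F k)) \<le> real_of_rat (of_nat n)" by (simp only: of_rat_less_eq)
      then have "real_of_rat (Max (F k) - Min (F k)) \<le> real n" by simp
      then show "\<rho> * real_of_rat (Max (F k) - Min (F k)) \<le> \<rho> * real n" using rho by simp
    qed
    finally show ?thesis .
  qed
  have "(\<integral>\<^sup>+P. (SUP k. g k P) \<partial>mubar) = (SUP k. \<integral>\<^sup>+P. g k P \<partial>mubar)"
    by (rule nn_integral_monotone_convergence_SUP_AE[where f=g, OF gmono gm])
  also have "\<dots> \<le> ennreal (\<rho> * real n)" using gint by (intro SUP_least) auto
  finally have "(\<integral>\<^sup>+P. (SUP k. g k P) \<partial>mubar) \<noteq> \<infinity>" by (auto simp: top_unique)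
  then have ae: "AE P in mubar. (SUP k. g k P) \<noteq> \<infinity>"
    by (intro nn_integral_PInf_AE) (use gm in auto)
  show ?thesis
  proof (rule AE_mp[OF ae], rule AE_I2, rule impI)
    fix P assume P: "P \<in> space mubar" and fin: "(SUP k. g k P) \<noteq> \<infinity>"
    then have p: "partition_on Qplus P" using sp Parts_iff by blast
    have "(SUP k. g k P) < top" using fin by (metis infinity_ennreal_def less_top)
    then obtain K where K: "(SUP k. g k P) < of_nat K" using ennreal_Ex_less_of_nat by blast
    have cK: "cnt P (F k) \<le> K" for k
    proof -
      have "g k P \<le> (SUP k. g k P)" by (rule SUP_upper) simp
      then have "g k P < of_nat K" using K by (rule le_less_trans)
      then have "of_nat (cnt P (F k)) < (of_nat K :: ennreal)" using hF_eq[OF P Ffin] unfolding g_def by simp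
      then show ?thesis by simp
    qed
    show "\<exists>K::nat. \<forall>S. finite S \<and> S \<subseteq> Qn n \<longrightarrow> cnt P S \<le> K"
    proof (intro exI allI impI)
      fix S assume S: "finite S \<and> S \<subseteq> Qn n"
      show "cnt P S \<le> K"
      proof (cases "S = {}")
        case True
        then show ?thesis unfolding cnt_def cntD_def by simp
      next
        case False
        define k where "k = Max (to_nat_on Q ` S)"
        have "S \<subseteq> F k"
        proof
          fix s assume s: "s \<in> S"
          then have sQ: "s \<in> Q" using S unfolding Q_def by auto
          have "to_nat_on Q s \<le> k" unfolding k_def using S s by (intro Max_ge) auto
          moreover have "e (to_nat_on Q s) = s" unfolding e_def using sQ cQ by simp
          ultimately show "s \<in> F k" unfolding F_def by (metis atMost_iff image_eqI)
        qed
        then have "cnt P S \<le> cnt P (F k)" using cnt_mono[OF p Ffin _ FQ] by blast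
        then show ?thesis using cK[of k] by simp
      qed
    qed
  qed
qed

lemma AE_bnd: "AE P in mubar. bnd_cnt P"
  unfolding bnd_cnt_def using AE_bnd_n by (subst AE_all_countable) blast

end



definition rc_rat :: "rat set set \<Rightarrow> bool" where
  "rc_rat P \<longleftrightarrow> (\<forall>x\<in>Qplus. \<exists>\<epsilon>>0. \<forall>q\<in>Qplus.
     real_of_rat x \<le> real_of_rat q \<and> real_of_rat q < real_of_rat x + \<epsilon> \<longrightarrow> same P x q)"

definition goodQ :: "rat set set \<Rightarrow> bool" where
  "goodQ P \<longleftrightarrow> P \<in> Parts Qplus \<and> rc_rat P \<and> bnd_cnt P"

definition germ :: "rat set set \<Rightarrow> real \<Rightarrow> rat set \<Rightarrow> bool" where
  "germ P x B \<longleftrightarrow> B \<in> P \<and> (\<exists>\<epsilon>>0. \<forall>q\<in>Qplus. x \<le> real_of_rat q \<and> real_of_rat q < x + \<epsilon> \<longrightarrow> q \<in> B)"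

lemma rc_rat_from_Q:
  assumes "right_cont_Q P"
  shows "rc_rat P"
  unfolding rc_rat_def
proof
  fix x assume xQ: "x \<in> Qplus"
  define X where "X n = x + inverse (of_nat (Suc n))" for n :: nat
  have XQ: "\<forall>n. X n \<in> Qplus"
  proof
    fix n
    have "0 \<le> x" using xQ unfolding Qplus_def by simp
    moreover have "0 \<le> inverse (of_nat (Suc n) :: rat)" by simp
    ultimately show "X n \<in> Qplus" unfolding X_def Qplus_def by simp
  qed
  have dec: "decseq X"
  proof (rule decseq_SucI)
    fix n
    have "inverse (of_nat (Suc (Suc n)) :: rat) \<le> inverse (of_nat (Suc n))"
      by (rule le_imp_inverse_le) auto
    then show "X (Suc n) \<le> X n" unfolding X_def by simp
  qed
  have rX: "real_of_rat (X n) = real_of_rat x + inverse (real (Suc n))" for n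
    unfolding X_def by (simp add: of_rat_add of_rat_inverse)
  have lim: "(\<lambda>n. real_of_rat (X n)) \<longlonglongrightarrow> real_of_rat x"
    unfolding rX using tendsto_add[OF tendsto_const LIMSEQ_inverse_real_of_nat, of "real_of_rat x"] by simp
  have ev: "\<forall>\<^sub>F n in sequentially. \<exists>S. segment Qplus P S \<and> x \<in> S \<and> X n \<in> S"
    using assms xQ XQ dec lim unfolding right_cont_Q_def by blast
  then obtain n S where S: "segment Qplus P S" "x \<in> S" "X n \<in> S"
    unfolding eventually_sequentially by blast
  from S(1) have cv: "convex_in Qplus S" and "\<exists>B\<in>P. S \<subseteq> B" unfolding segment_def by auto
  then obtain B where B: "B \<in> P" "S \<subseteq> B" by blast
  show "\<exists>\<epsilon>>0. \<forall>q\<in>Qplus. real_of_rat x \<le> real_of_rat q \<and> real_of_rat q < real_of_rat x + \<epsilon> \<longrightarrow> same P x q"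
  proof (intro exI conjI ballI impI)
    show "0 < inverse (real (Suc n))" by simp
    fix q assume qQ: "q \<in> Qplus" and q: "real_of_rat x \<le> real_of_rat q \<and> real_of_rat q < real_of_rat x + inverse (real (Suc n))"
    have "x \<le> q" using q by (simp add: of_rat_less_eq)
    moreover have "q \<le> X n"
    proof -
      have "real_of_rat q \<le> real_of_rat (X n)" using q rX[of n] by simp
      then show ?thesis by (simp add: of_rat_less_eq)
    qed
    ultimately have "q \<in> S" using cv S qQ unfolding convex_in_def by blast
    then show "same P x q" unfolding same_def using B S(2) by blast
  qed
qed

lemma rat_between:
  fixes x :: real
  assumes "0 \<le> x" "0 < \<delta>"
  shows "\<exists>q\<in>Qplus. x < real_of_rat q \<and> real_of_rat q < x + \<delta>"
proof -
  obtain q where q: "x < real_of_rat q" "real_of_rat q < x + \<delta>" using of_rat_dense[of x "x + \<delta>"] assms by auto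
  then have "0 < real_of_rat q" using assms by linarith
  then have "q \<in> Qplus" unfolding Qplus_def by simp
  then show ?thesis using q by blast
qed

lemma germ_unique:
  assumes p: "partition_on Qplus P" and x0: "0 \<le> x" and g1: "germ P x B" and g2: "germ P x C"
  shows "B = C"
proof -
  obtain e1 where e1: "e1 > 0" "\<forall>q\<in>Qplus. x \<le> real_of_rat q \<and> real_of_rat q < x + e1 \<longrightarrow> q \<in> B"
    using g1 unfolding germ_def by blast
  obtain e2 where e2: "e2 > 0" "\<forall>q\<in>Qplus. x \<le> real_of_rat q \<and> real_of_rat q < x + e2 \<longrightarrow> q \<in> C"
    using g2 unfolding germ_def by blast
  obtain q where q: "q \<in> Qplus" "x < real_of_rat q" "real_of_rat q < x + min e1 e2"
    using rat_between[OF x0, of "min e1 e2"] e1 e2 by auto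
  have "q \<in> B" "q \<in> C" using q e1 e2 by auto
  moreover have "B \<in> P" "C \<in> P" using g1 g2 unfolding germ_def by auto
  ultimately show ?thesis using same_block[OF p] by blast
qed

lemma germ_rat:
  assumes p: "partition_on Qplus P" and rc: "rc_rat P" and qQ: "q \<in> Qplus" and B: "B \<in> P" "q \<in> B"
  shows "germ P (real_of_rat q) B"
proof -
  obtain e where e: "e > 0" "\<forall>r\<in>Qplus. real_of_rat q \<le> real_of_rat r \<and> real_of_rat r < real_of_rat q + e \<longrightarrow> same P q r"
    using rc qQ unfolding rc_rat_def by blast
  show ?thesis unfolding germ_def
  proof (intro conjI exI[of _ e] ballI impI)
    fix r assume "r \<in> Qplus" "real_of_rat q \<le> real_of_rat r \<and> real_of_rat r < real_of_rat q + e"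
    then have "same P q r" using e by blast
    then obtain C where "C \<in> P" "q \<in> C" "r \<in> C" unfolding same_def by blast
    then show "r \<in> B" using same_block[OF p B(1) \<open>C \<in> P\<close> B(2)] by simp
  qed (use B e in auto)
qed

lemma germ_at_rat_mem:
  assumes "germ P (real_of_rat q) B" "q \<in> Qplus" shows "q \<in> B" "B \<in> P"
proof -
  obtain e where e: "e > 0" "\<forall>r\<in>Qplus. real_of_rat q \<le> real_of_rat r \<and> real_of_rat r < real_of_rat q + e \<longrightarrow> r \<in> B"
    using assms unfolding germ_def by blast
  show "B \<in> P" using assms unfolding germ_def by simp
  show "q \<in> B" using e assms(2) by auto
qed

lemma cnt_pair:
  assumes fW: "finite W" and rs: "r < s" and sW: "\<forall>w\<in>W. s < w" and ns: "\<not> same P r s"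
  shows "cnt P W + 1 \<le> cnt P (insert r (insert s W))"
proof -
  have c1: "cnt P W \<le> cnt P (insert s W)"
  proof (cases "W = {}")
    case True
    then show ?thesis unfolding cnt_def cntD_def by simp
  next
    case False
    then show ?thesis using cnt_bottom[OF fW False sW, of P] by simp
  qed
  have f2: "finite (insert s W)" using fW by simp
  have r2: "\<forall>t\<in>insert s W. r < t" using rs sW less_trans by blast
  have m: "Min (insert s W) = s"
  proof (rule Min_eqI)
    show "finite (insert s W)" by (rule f2)
    fix y assume "y \<in> insert s W" then show "s \<le> y" using sW by (auto intro: less_imp_le)
  qed simp
  have "cnt P (insert r (insert s W)) = cnt P (insert s W) + 1"
    using cnt_bottom[OF f2 _ r2, of P] m ns by simp
  then show ?thesis using c1 by simp
qed

lemma bnd_cnt_D: "bnd_cnt P \<Longrightarrow> \<exists>K. \<forall>W. finite W \<and> W \<subseteq> Qn n \<longrightarrow> cnt P W \<le> K"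
  unfolding bnd_cnt_def by blast

lemma in_Qn:
  assumes "w \<in> Qplus" "real_of_rat w < real n" shows "w \<in> Qn n"
proof -
  have "real_of_rat w < real_of_rat (of_nat n)" using assms by simp
  then have "w < of_nat n" by (simp only: of_rat_less)
  then show ?thesis using assms unfolding Qn_def by simp
qed

lemma germ_exists:
  assumes g: "goodQ P" and x0: "0 \<le> x"
  shows "\<exists>B. germ P x B"
proof (rule ccontr)
  assume ng: "\<not> (\<exists>B. germ P x B)"
  have p: "partition_on Qplus P" and rc: "rc_rat P" and bc: "bnd_cnt P"
    using g unfolding goodQ_def Parts_iff by auto
  have nrat: "real_of_rat q \<noteq> x" if qQ: "q \<in> Qplus" for q
  proof
    assume qx: "real_of_rat q = x"
    obtain B where B: "B \<in> P" "q \<in> B" using p qQ unfolding partition_on_def by blast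
    then show False using germ_rat[OF p rc qQ B] ng qx by blast
  qed
  have claim: "\<forall>\<epsilon>>0. \<exists>W. finite W \<and> W \<subseteq> Qplus \<and> (\<forall>w\<in>W. x < real_of_rat w \<and> real_of_rat w < x + \<epsilon>) \<and> k \<le> cnt P W" for k
  proof (induction k)
    case 0
    show ?case by (intro allI impI exI[of _ "{}"]) auto
  next
    case (Suc k)
    show ?case
    proof (intro allI impI)
      fix \<epsilon> :: real assume e: "\<epsilon> > 0"
      from Suc.IH[rule_format, OF e] obtain W' where W': "finite W'" "W' \<subseteq> Qplus" "\<forall>w\<in>W'. x < real_of_rat w \<and> real_of_rat w < x + \<epsilon>" "k \<le> cnt P W'"
        by (elim exE conjE) simp
      define m where "m = (if W' = {} then x + \<epsilon> else real_of_rat (Min W'))"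
      have mx: "x < m" "m \<le> x + \<epsilon>"
      proof -
        show "x < m"
        proof (cases "W' = {}")
          case True then show ?thesis unfolding m_def using e by simp
        next
          case False then show ?thesis unfolding m_def using W' Min_in[OF W'(1) False] by auto
        qed
        show "m \<le> x + \<epsilon>"
        proof (cases "W' = {}")
          case True then show ?thesis unfolding m_def by simp
        next
          case False
          then have "real_of_rat (Min W') < x + \<epsilon>" using W'(3) Min_in[OF W'(1) False] by blast
          then show ?thesis unfolding m_def using False by simp
        qed
      qed
      have mW: "m \<le> real_of_rat w" if "w \<in> W'" for w
      proof -
        have ne: "W' \<noteq> {}" using that by blast
        have "Min W' \<le> w" using W'(1) that by simp
        then show ?thesis unfolding m_def using ne by (simp add: of_rat_less_eq)
      qed
      obtain q0 where q0: "q0 \<in> Qplus" "x < real_of_rat q0" "real_of_rat q0 < x + (m - x)"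
        using rat_between[OF x0, of "m - x"] mx by auto
      obtain B0 where B0: "B0 \<in> P" "q0 \<in> B0" using p q0(1) unfolding partition_on_def by blast
      have "\<not> germ P x B0" using ng by blast
      then have h: "\<forall>\<epsilon>>0. \<exists>q\<in>Qplus. x \<le> real_of_rat q \<and> real_of_rat q < x + \<epsilon> \<and> q \<notin> B0"
        unfolding germ_def using B0 by auto
      have "m - x > 0" using mx by simp
      from h[rule_format, OF this] obtain q1 where q1: "q1 \<in> Qplus" "x \<le> real_of_rat q1" "real_of_rat q1 < m" "q1 \<notin> B0"
        by auto
      have q1x: "x < real_of_rat q1" using q1 nrat[OF q1(1)] by auto
      have ns01: "\<not> same P q0 q1"
      proof
        assume "same P q0 q1"
        then obtain C where "C \<in> P" "q0 \<in> C" "q1 \<in> C" unfolding same_def by blast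
        then show False using same_block[OF p B0(1) \<open>C \<in> P\<close> B0(2)] q1(4) by simp
      qed
      have neq: "q0 \<noteq> q1" using B0 q1 by auto
      define u where "u = min q0 q1"
      define v where "v = max q0 q1"
      have uv: "u < v" unfolding u_def v_def using neq by (auto simp: min_def max_def)
      have ns10: "\<not> same P q1 q0" using ns01 same_sym by metis
      have nsuv: "\<not> same P u v" unfolding u_def v_def using ns01 ns10
        by (cases "q0 \<le> q1") (auto simp: min_def max_def)
      have uvb: "x < real_of_rat u" "real_of_rat v < m" "x < real_of_rat v" "real_of_rat u < m"
        unfolding u_def v_def using q0 q1 q1x by (auto simp: min_def max_def)
      have vW: "\<forall>w\<in>W'. v < w"
      proof
        fix w assume "w \<in> W'"
        then have "real_of_rat v < real_of_rat w" using mW uvb by fastforce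
        then show "v < w" by (simp only: of_rat_less)
      qed
      have uvQ: "u \<in> Qplus" "v \<in> Qplus" unfolding u_def v_def using q0 q1 by (auto simp: min_def max_def)
      have "cnt P W' + 1 \<le> cnt P (insert u (insert v W'))" by (rule cnt_pair[OF W'(1) uv vW nsuv])
      then show "\<exists>W. finite W \<and> W \<subseteq> Qplus \<and> (\<forall>w\<in>W. x < real_of_rat w \<and> real_of_rat w < x + \<epsilon>) \<and> Suc k \<le> cnt P W"
        using W' uvb uvQ mx by (intro exI[of _ "insert u (insert v W')"]) auto
    qed
  qed
  obtain n :: nat where n: "x + 1 \<le> real n" using real_arch_simple by blast
  obtain K where K: "\<forall>W. finite W \<and> W \<subseteq> Qn n \<longrightarrow> cnt P W \<le> K" using bnd_cnt_D[OF bc] by blast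
  obtain W where W: "finite W" "W \<subseteq> Qplus" "\<forall>w\<in>W. x < real_of_rat w \<and> real_of_rat w < x + 1" "Suc K \<le> cnt P W"
  proof -
    have "(0::real) < 1" by simp
    from claim[of "Suc K", rule_format, OF this] show ?thesis using that by blast
  qed
  have "W \<subseteq> Qn n"
  proof
    fix w assume "w \<in> W"
    then show "w \<in> Qn n" using W n by (intro in_Qn) auto
  qed
  then show False using K W by fastforce
qed



lemma seg_max:
  assumes S: "segment A P S" and T: "convex_in A T" "T \<subseteq> X" "X \<in> P" "S \<subseteq> T"
  shows "T = S"
  using S T unfolding segment_def by blast

lemma rc_from_germ:
  assumes p: "partition_on Rplus P'"
    and rg: "\<forall>x\<in>Rplus. \<exists>\<epsilon>>0. \<exists>X\<in>P'. {x..<x+\<epsilon>} \<subseteq> X"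
    and S: "segment Rplus P' S"
  shows "(\<exists>a b. a < b \<and> S = {a..<b}) \<or> (\<exists>a. S = {a..})"
proof -
  have Sne: "S \<noteq> {}" and cv: "convex_in Rplus S" using S unfolding segment_def by auto
  obtain X where X: "X \<in> P'" "S \<subseteq> X" using S unfolding segment_def by blast
  have SR: "S \<subseteq> Rplus" using cv unfolding convex_in_def by simp
  have cvD: "w \<in> S" if "u \<in> S" "v \<in> S" "w \<in> Rplus" "u \<le> w" "w \<le> v" for u v w
    using cv that unfolding convex_in_def by blast
  have bb: "bdd_below S" unfolding bdd_below_def using SR unfolding Rplus_def by auto
  define a where "a = Inf S"
  have aS_le: "a \<le> s" if "s \<in> S" for s unfolding a_def using bb that by (rule cInf_lower[rotated])
  have a0: "0 \<le> a" unfolding a_def using Sne SR by (intro cInf_greatest) (auto simp: Rplus_def)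
  have aR: "a \<in> Rplus" using a0 unfolding Rplus_def by simp
  have aS: "a \<in> S"
  proof (rule ccontr)
    assume naS: "a \<notin> S"
    obtain \<epsilon> Y where e: "\<epsilon> > 0" "Y \<in> P'" "{a..<a+\<epsilon>} \<subseteq> Y" using rg aR by blast
    have "Inf S < a + \<epsilon>" using e unfolding a_def by simp
    then obtain s where s: "s \<in> S" "s < a + \<epsilon>" using cInf_less_iff[OF Sne bb] by blast
    have "a < s" using aS_le[OF s(1)] naS s(1) by (cases "a = s") auto
    then have "s \<in> Y" using s e by auto
    then have YX: "Y = X" using same_block[OF p e(2) X(1)] s X by blast
    define T where "T = S \<union> {a..<a+\<epsilon>}"
    have cvT: "convex_in Rplus T" unfolding convex_in_def
    proof (intro conjI ballI impI)
      show "T \<subseteq> Rplus" unfolding T_def using SR a0 unfolding Rplus_def by auto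
      fix u v w assume uv: "u \<in> T" "v \<in> T" "w \<in> Rplus" "u \<le> w \<and> w \<le> v"
      show "w \<in> T"
      proof (cases "w < a + \<epsilon>")
        case True
        have "a \<le> u" using uv(1) aS_le unfolding T_def by auto
        then show ?thesis using True uv unfolding T_def by auto
      next
        case False
        then have "v \<in> S" using uv unfolding T_def by auto
        moreover have "s \<le> w" using False s by simp
        ultimately have "w \<in> S" using cvD[OF s(1) _ uv(3)] uv by blast
        then show ?thesis unfolding T_def by simp
      qed
    qed
    have "T \<subseteq> X" unfolding T_def using X e YX by auto
    then have "T = S" using seg_max[OF S cvT _ X(1)] unfolding T_def by blast
    moreover have "a \<in> T" unfolding T_def using e by simp
    ultimately show False using naS by simp
  qed
  show ?thesis
  proof (cases "bdd_above S")
    case True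
    define b where "b = Sup S"
    have Sb: "s \<le> b" if "s \<in> S" for s unfolding b_def using True that by (rule cSup_upper[rotated])
    have bS: "b \<notin> S"
    proof
      assume bS: "b \<in> S"
      then have bR: "b \<in> Rplus" using SR by auto
      obtain \<epsilon> Y where e: "\<epsilon> > 0" "Y \<in> P'" "{b..<b+\<epsilon>} \<subseteq> Y" using rg bR by blast
      have "b \<in> Y" using e by auto
      then have YX: "Y = X" using same_block[OF p e(2) X(1)] bS X by blast
      define T where "T = S \<union> {b..<b+\<epsilon>}"
      have cvT: "convex_in Rplus T" unfolding convex_in_def
      proof (intro conjI ballI impI)
        show "T \<subseteq> Rplus" unfolding T_def using SR bR unfolding Rplus_def by auto
        fix u v w assume uv: "u \<in> T" "v \<in> T" "w \<in> Rplus" "u \<le> w \<and> w \<le> v"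
        show "w \<in> T"
        proof (cases "w \<le> b")
          case True
          show ?thesis
          proof (cases "u \<in> S")
            case True
            then have "w \<in> S" using cvD[OF _ bS uv(3)] uv \<open>w \<le> b\<close> by blast
            then show ?thesis unfolding T_def by simp
          next
            case False
            then have "b \<le> u" using uv unfolding T_def by auto
            then have "w = b" using True uv by simp
            then show ?thesis using bS unfolding T_def by simp
          qed
        next
          case False
          then have "v \<notin> S" using Sb uv by force
          then have "v < b + \<epsilon>" using uv unfolding T_def by auto
          then show ?thesis using False uv unfolding T_def by auto
        qed
      qed
      have "T \<subseteq> X" unfolding T_def using X e YX by auto
      then have "T = S" using seg_max[OF S cvT _ X(1)] unfolding T_def by blast
      moreover have "b + \<epsilon>/2 \<in> T" unfolding T_def using e by simp
      ultimately have "b + \<epsilon>/2 \<le> b" using Sb by blast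
      then show False using e by simp
    qed
    have "S = {a..<b}"
    proof (intro set_eqI iffI)
      fix s assume "s \<in> S"
      then show "s \<in> {a..<b}" using aS_le Sb bS by (cases "s = b") force+
    next
      fix y assume y: "y \<in> {a..<b}"
      then have "y < Sup S" unfolding b_def by simp
      then obtain s where "s \<in> S" "y < s" using less_cSup_iff[OF Sne True] by blast
      moreover have "y \<in> Rplus" using y a0 unfolding Rplus_def by simp
      ultimately show "y \<in> S" using cvD[OF aS] y by auto
    qed
    moreover have "a < b" using aS bS Sb[OF aS] by (cases "a = b") auto
    ultimately show ?thesis by blast
  next
    case False
    have "S = {a..}"
    proof (intro set_eqI iffI)
      fix s assume "s \<in> S"
      then show "s \<in> {a..}" using aS_le by simp
    next
      fix y assume y: "y \<in> {a..}"
      obtain s where "s \<in> S" "y < s" using False unfolding bdd_above_def by (meson not_le)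
      moreover have "y \<in> Rplus" using y a0 unfolding Rplus_def by simp
      ultimately show "y \<in> S" using cvD[OF aS] y by auto
    qed
    then show ?thesis by blast
  qed
qed

definition blk :: "rat set set \<Rightarrow> rat set \<Rightarrow> real set" where
  "blk P B = {x\<in>Rplus. germ P x B}"

definition lift :: "rat set set \<Rightarrow> real set set" where
  "lift P = blk P ` P"

lemma blk_right:
  assumes g: "germ P x B" and x: "x \<in> Rplus"
  shows "\<exists>\<epsilon>>0. {x..<x+\<epsilon>} \<subseteq> blk P B"
proof -
  obtain e where e: "e > 0" "\<forall>q\<in>Qplus. x \<le> real_of_rat q \<and> real_of_rat q < x + e \<longrightarrow> q \<in> B"
    using g unfolding germ_def by blast
  have "{x..<x+e} \<subseteq> blk P B"
  proof
    fix y assume y: "y \<in> {x..<x+e}"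
    have "germ P y B" unfolding germ_def
    proof (intro conjI exI[of _ "x + e - y"] ballI impI)
      show "B \<in> P" using g unfolding germ_def by simp
      show "0 < x + e - y" using y by simp
      fix q assume "q \<in> Qplus" "y \<le> real_of_rat q \<and> real_of_rat q < y + (x + e - y)"
      then show "q \<in> B" using e y by auto
    qed
    moreover have "y \<in> Rplus" using y x unfolding Rplus_def by simp
    ultimately show "y \<in> blk P B" unfolding blk_def by simp
  qed
  then show ?thesis using e by blast
qed

context
  fixes P assumes g: "goodQ P"
begin

lemma gp: "partition_on Qplus P" using g unfolding goodQ_def Parts_iff by simp
lemma grc: "rc_rat P" using g unfolding goodQ_def by simp

lemma germ_ex: "x \<in> Rplus \<Longrightarrow> \<exists>B. germ P x B"
  using germ_exists[OF g] unfolding Rplus_def by simp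

lemma germ_un: "x \<in> Rplus \<Longrightarrow> germ P x B \<Longrightarrow> germ P x C \<Longrightarrow> B = C"
  using germ_unique[OF gp] unfolding Rplus_def by simp

lemma blk_rat: "B \<in> P \<Longrightarrow> real_of_rat -` blk P B \<inter> Qplus = B"
proof (intro set_eqI iffI)
  fix q assume B: "B \<in> P" and "q \<in> real_of_rat -` blk P B \<inter> Qplus"
  then have "germ P (real_of_rat q) B" "q \<in> Qplus" unfolding blk_def by auto
  then show "q \<in> B" using germ_at_rat_mem by blast
next
  fix q assume B: "B \<in> P" and qB: "q \<in> B"
  then have qQ: "q \<in> Qplus" using gp unfolding partition_on_def by blast
  then have "germ P (real_of_rat q) B" using germ_rat[OF gp grc qQ B qB] by simp
  moreover have "real_of_rat q \<in> Rplus" using qQ unfolding Rplus_def Qplus_def by simp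
  ultimately show "q \<in> real_of_rat -` blk P B \<inter> Qplus" using qQ unfolding blk_def by simp
qed

lemma blk_ne: "B \<in> P \<Longrightarrow> blk P B \<noteq> {}"
proof -
  assume B: "B \<in> P"
  then have "B \<noteq> {}" using gp unfolding partition_on_def by blast
  then show ?thesis using blk_rat[OF B] by auto
qed

lemma blk_inj: "B \<in> P \<Longrightarrow> C \<in> P \<Longrightarrow> x \<in> blk P B \<Longrightarrow> x \<in> blk P C \<Longrightarrow> B = C"
  unfolding blk_def using germ_un by blast

lemma lift_part: "partition_on Rplus (lift P)"
proof (rule partition_onI)
  show "\<Union>(lift P) = Rplus"
  proof (intro set_eqI iffI)
    fix x assume "x \<in> \<Union>(lift P)"
    then show "x \<in> Rplus" unfolding lift_def blk_def by auto
  next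
    fix x assume x: "x \<in> Rplus"
    then obtain B where B: "germ P x B" using germ_ex by blast
    then have "B \<in> P" unfolding germ_def by simp
    then show "x \<in> \<Union>(lift P)" unfolding lift_def blk_def using x B by auto
  qed
next
  fix X Y assume X: "X \<in> lift P" and Y: "Y \<in> lift P" and ne: "X \<noteq> Y"
  obtain B where B: "B \<in> P" "X = blk P B" using X unfolding lift_def by blast
  obtain C where C: "C \<in> P" "Y = blk P C" using Y unfolding lift_def by blast
  show "disjnt X Y" unfolding disjnt_def
  proof (rule ccontr)
    assume "X \<inter> Y \<noteq> {}"
    then obtain x where "x \<in> blk P B" "x \<in> blk P C" using B C by blast
    then have "B = C" using blk_inj B C by blast
    then show False using ne B C by simp
  qed
next
  show "{} \<notin> lift P" unfolding lift_def using blk_ne by auto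
qed

lemma Rest_Q_lift: "Rest_Q (lift P) = P"
proof -
  have "Rest_Q (lift P) = (\<lambda>B. real_of_rat -` blk P B \<inter> Qplus) ` P - {{}}"
    unfolding Rest_Q_def lift_def by (simp add: image_image)
  also have "(\<lambda>B. real_of_rat -` blk P B \<inter> Qplus) ` P = (\<lambda>B. B) ` P"
    using blk_rat by (intro image_cong) auto
  also have "(\<lambda>B. B) ` P - {{}} = P" using gp unfolding partition_on_def by auto
  finally show ?thesis .
qed

lemma lift_rg: "\<forall>x\<in>Rplus. \<exists>\<epsilon>>0. \<exists>X\<in>lift P. {x..<x+\<epsilon>} \<subseteq> X"
proof
  fix x assume x: "x \<in> Rplus"
  then obtain B where B: "germ P x B" using germ_ex by blast
  then have "B \<in> P" unfolding germ_def by simp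
  then show "\<exists>\<epsilon>>0. \<exists>X\<in>lift P. {x..<x+\<epsilon>} \<subseteq> X"
    using blk_right[OF B x] unfolding lift_def by blast
qed

lemma lift_rc: "right_cont_R (lift P)"
  unfolding right_cont_R_def using rc_from_germ[OF lift_part lift_rg] by blast

end



lemma seg_min:
  assumes p: "partition_on Rplus P'"
    and rg: "\<forall>x\<in>Rplus. \<exists>\<epsilon>>0. \<exists>X\<in>P'. {x..<x+\<epsilon>} \<subseteq> X"
    and S: "segment Rplus P' S"
  shows "Inf S \<in> S" "\<And>s. s \<in> S \<Longrightarrow> Inf S \<le> s"
proof -
  have "\<exists>a. a \<in> S \<and> (\<forall>s\<in>S. a \<le> s)"
    using rc_from_germ[OF p rg S] by auto
  then obtain a where a: "a \<in> S" "\<forall>s\<in>S. a \<le> s" by blast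
  have "Inf S = a" using a by (intro cInf_eq_minimum) auto
  then show "Inf S \<in> S" "\<And>s. s \<in> S \<Longrightarrow> Inf S \<le> s" using a by auto
qed

lemma seg_eq:
  assumes p: "partition_on Rplus P'" and S1: "segment Rplus P' S1" and S2: "segment Rplus P' S2"
    and c: "c \<in> S1" "c \<in> S2"
  shows "S1 = S2"
proof -
  obtain X1 where X1: "X1 \<in> P'" "S1 \<subseteq> X1" using S1 unfolding segment_def by blast
  obtain X2 where X2: "X2 \<in> P'" "S2 \<subseteq> X2" using S2 unfolding segment_def by blast
  have X: "X1 = X2" using same_block[OF p X1(1) X2(1)] c X1 X2 by blast
  have cv1: "convex_in Rplus S1" and cv2: "convex_in Rplus S2" using S1 S2 unfolding segment_def by auto
  have d1: "w \<in> S1" if "u \<in> S1" "v \<in> S1" "w \<in> Rplus" "u \<le> w" "w \<le> v" for u v w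
    using cv1 that unfolding convex_in_def by blast
  have d2: "w \<in> S2" if "u \<in> S2" "v \<in> S2" "w \<in> Rplus" "u \<le> w" "w \<le> v" for u v w
    using cv2 that unfolding convex_in_def by blast
  have cvT: "convex_in Rplus (S1 \<union> S2)" unfolding convex_in_def
  proof (intro conjI ballI impI)
    show "S1 \<union> S2 \<subseteq> Rplus" using cv1 cv2 unfolding convex_in_def by auto
    fix u v w assume uv: "u \<in> S1 \<union> S2" "v \<in> S1 \<union> S2" "w \<in> Rplus" "u \<le> w \<and> w \<le> v"
    show "w \<in> S1 \<union> S2"
    proof (cases "w \<le> c")
      case True
      show ?thesis
      proof (cases "u \<in> S1")
        case True
        then show ?thesis using d1[of u c w] c uv \<open>w \<le> c\<close> by blast
      next
        case False
        then have "u \<in> S2" using uv by blast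
        then show ?thesis using d2[of u c w] c uv \<open>w \<le> c\<close> by blast
      qed
    next
      case False
      show ?thesis
      proof (cases "v \<in> S1")
        case True
        then show ?thesis using d1[of c v w] c uv False by auto
      next
        case F2: False
        then have "v \<in> S2" using uv by blast
        then show ?thesis using d2[of c v w] c uv False by auto
      qed
    qed
  qed
  have "S1 \<union> S2 = S1" using seg_max[OF S1 cvT _ X1(1)] X1 X2 X by blast
  moreover have "S1 \<union> S2 = S2" using seg_max[OF S2 cvT _ X2(1)] X1 X2 X by blast
  ultimately show ?thesis by simp
qed

context
  fixes P assumes g: "goodQ P"
begin

lemma left_boundary:
  assumes S: "segment Rplus (lift P) S" and aS: "a \<in> S" and amin: "\<forall>s\<in>S. a \<le> s"
    and ga: "germ P a B" and d: "0 < \<delta>" "\<delta> \<le> a"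
  shows "\<exists>y. a - \<delta> < y \<and> y < a \<and> \<not> germ P y B"
proof (rule ccontr)
  assume "\<not> (\<exists>y. a - \<delta> < y \<and> y < a \<and> \<not> germ P y B)"
  then have all: "\<And>y. a - \<delta> < y \<Longrightarrow> y < a \<Longrightarrow> germ P y B" by blast
  obtain X where X: "X \<in> lift P" "S \<subseteq> X" using S unfolding segment_def by blast
  then obtain C where C: "C \<in> P" "X = blk P C" unfolding lift_def by blast
  have aR: "a \<in> Rplus" using d unfolding Rplus_def by simp
  have "germ P a C" using X C aS unfolding blk_def by auto
  then have BC: "B = C" using germ_un[OF g aR ga] by simp
  have cv: "convex_in Rplus S" using S unfolding segment_def by simp
  define T where "T = S \<union> {a-\<delta><..<a}"
  have cvT: "convex_in Rplus T" unfolding convex_in_def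
  proof (intro conjI ballI impI)
    show "T \<subseteq> Rplus" unfolding T_def using cv d unfolding convex_in_def Rplus_def by auto
    fix u v w assume uv: "u \<in> T" "v \<in> T" "w \<in> Rplus" "u \<le> w \<and> w \<le> v"
    show "w \<in> T"
    proof (cases "a \<le> w")
      case True
      then have "v \<in> S" using uv unfolding T_def by auto
      then have "w \<in> S" using cv aS uv True unfolding convex_in_def by blast
      then show ?thesis unfolding T_def by simp
    next
      case False
      then have "u \<notin> S" using amin uv by force
      then have "a - \<delta> < u" using uv unfolding T_def by auto
      then show ?thesis using False uv unfolding T_def by auto
    qed
  qed
  have "{a-\<delta><..<a} \<subseteq> X"
  proof
    fix y assume y: "y \<in> {a-\<delta><..<a}"
    then have "germ P y B" using all by auto
    moreover have "y \<in> Rplus" using y d unfolding Rplus_def by auto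
    ultimately show "y \<in> X" unfolding C blk_def BC by simp
  qed
  then have "T \<subseteq> X" unfolding T_def using X by auto
  then have "T = S" using seg_max[OF S cvT _ X(1)] unfolding T_def by blast
  moreover have "a - \<delta>/2 \<in> T" unfolding T_def using d by simp
  ultimately show False using amin d by fastforce
qed

definition mins :: "real \<Rightarrow> real set" where
  "mins t = {a. 0 < a \<and> a \<le> t \<and> (\<exists>S. segment Rplus (lift P) S \<and> a \<in> S \<and> (\<forall>s\<in>S. a \<le> s))}"

lemma mins_count:
  assumes fA: "finite A0" and A0: "A0 \<subseteq> mins t"
  shows "\<forall>m\<ge>0. (\<forall>a\<in>A0. m < a) \<longrightarrow> (\<exists>W. finite W \<and> W \<subseteq> Qplus \<and>
          (\<forall>w\<in>W. m < real_of_rat w \<and> real_of_rat w < t + 1) \<and> card A0 \<le> cnt P W)"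
  using fA A0
proof (induction A0 rule: finite_linorder_min_induct)
  case empty
  show ?case by (intro allI impI exI[of _ "{}"]) auto
next
  case (insert a A')
  show ?case
  proof (intro allI impI)
    fix m :: real assume m0: "0 \<le> m" and ma: "\<forall>b\<in>insert a A'. m < b"
    have aM: "a \<in> mins t" using insert by blast
    then obtain S where S: "segment Rplus (lift P) S" "a \<in> S" "\<forall>s\<in>S. a \<le> s" and at: "a \<le> t" "0 < a"
      unfolding mins_def by blast
    have aR: "a \<in> Rplus" using at unfolding Rplus_def by simp
    obtain Ba where Ba: "germ P a Ba" using germ_ex[OF g aR] by blast
    obtain ea where ea: "ea > 0" "\<forall>q\<in>Qplus. a \<le> real_of_rat q \<and> real_of_rat q < a + ea \<longrightarrow> q \<in> Ba"
      using Ba unfolding germ_def by blast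
    have ma2: "m < a" using ma by simp
    obtain y where y: "a - (a - m) < y" "y < a" "\<not> germ P y Ba"
      using left_boundary[OF S Ba, of "a - m"] ma2 m0 by auto
    have yR: "y \<in> Rplus" using y m0 unfolding Rplus_def by simp
    obtain By where By: "germ P y By" using germ_ex[OF g yR] by blast
    obtain ey where ey: "ey > 0" "\<forall>q\<in>Qplus. y \<le> real_of_rat q \<and> real_of_rat q < y + ey \<longrightarrow> q \<in> By"
      using By unfolding germ_def by blast
    have y0: "0 \<le> y" using yR unfolding Rplus_def by simp
    obtain r where r: "r \<in> Qplus" "y < real_of_rat r" "real_of_rat r < y + min ey (a - y)"
      using rat_between[OF y0, of "min ey (a - y)"] ey y by auto
    have rB: "r \<in> By" using ey r by auto
    define nA where "nA = (if A' = {} then t + 1 else Min A')"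
    have anA: "a < nA"
    proof (cases "A' = {}")
      case True then show ?thesis unfolding nA_def using at by simp
    next
      case False then show ?thesis unfolding nA_def using insert Min_in[OF insert(1) False] by auto
    qed
    have nAt: "nA \<le> t + 1"
    proof (cases "A' = {}")
      case True then show ?thesis unfolding nA_def by simp
    next
      case False
      have "Min A' \<in> A'" using Min_in[OF insert(1) False] .
      then have "Min A' \<in> mins t" using insert.prems by blast
      then show ?thesis unfolding nA_def mins_def using False by simp
    qed
    have nAle: "nA \<le> b" if "b \<in> A'" for b
    proof -
      have "A' \<noteq> {}" using that by blast
      then show ?thesis unfolding nA_def using that insert(1) by simp
    qed
    have a0: "0 \<le> a" using at by simp
    obtain s where s: "s \<in> Qplus" "a < real_of_rat s" "real_of_rat s < a + min ea (nA - a)"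
      using rat_between[OF a0, of "min ea (nA - a)"] ea anA by auto
    have sB: "s \<in> Ba" using ea s by auto
    have BaP: "Ba \<in> P" "By \<in> P" using Ba By unfolding germ_def by auto
    have nBB: "Ba \<noteq> By" using By y(3) by blast
    have nrs: "\<not> same P r s"
    proof
      assume "same P r s"
      then obtain C where C: "C \<in> P" "r \<in> C" "s \<in> C" unfolding same_def by blast
      have "C = By" using same_block[OF gp[OF g] C(1) BaP(2) C(2) rB] .
      moreover have "C = Ba" using same_block[OF gp[OF g] C(1) BaP(1) C(3) sB] .
      ultimately show False using nBB by simp
    qed
    have s0: "0 \<le> real_of_rat s" using s a0 by linarith
    have sA: "\<forall>b\<in>A'. real_of_rat s < b" using s nAle by fastforce
    have A'sub: "A' \<subseteq> mins t" using insert.prems by blast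
    from insert.IH[OF A'sub, rule_format, OF s0 sA[rule_format]] obtain W' where
      W': "finite W'" "W' \<subseteq> Qplus" "\<forall>w\<in>W'. real_of_rat s < real_of_rat w \<and> real_of_rat w < t + 1" "card A' \<le> cnt P W'"
      by blast
    have rs: "r < s"
    proof -
      have "real_of_rat r < real_of_rat s" using r s by simp
      then show ?thesis by (simp only: of_rat_less)
    qed
    have sW: "\<forall>w\<in>W'. s < w" using W'(3) by (simp add: of_rat_less)
    have c: "cnt P W' + 1 \<le> cnt P (insert r (insert s W'))" by (rule cnt_pair[OF W'(1) rs sW nrs])
    have "a \<notin> A'" using insert(2) by blast
    then have "card (insert a A') = card A' + 1" using insert(1) by simp
    moreover have "\<forall>w\<in>insert r (insert s W'). m < real_of_rat w \<and> real_of_rat w < t + 1"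
      using W'(3) r s y nAt anA m0 by auto
    ultimately show "\<exists>W. finite W \<and> W \<subseteq> Qplus \<and> (\<forall>w\<in>W. m < real_of_rat w \<and> real_of_rat w < t + 1) \<and>
          card (insert a A') \<le> cnt P W"
      using W' r s c by (intro exI[of _ "insert r (insert s W')"]) auto
  qed
qed

lemma mins_finite: "finite (mins t)"
proof (rule ccontr)
  assume inf: "infinite (mins t)"
  have bc: "bnd_cnt P" using g unfolding goodQ_def by simp
  obtain n :: nat where n: "t + 1 \<le> real n" using real_arch_simple by blast
  obtain K where K: "\<forall>W. finite W \<and> W \<subseteq> Qn n \<longrightarrow> cnt P W \<le> K" using bnd_cnt_D[OF bc] by blast
  obtain A0 where A0: "finite A0" "card A0 = Suc K" "A0 \<subseteq> mins t"
    using infinite_arbitrarily_large[OF inf] by blast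
  have pos: "\<forall>a\<in>A0. (0::real) < a" using A0 unfolding mins_def by auto
  obtain W where W: "finite W" "W \<subseteq> Qplus" "\<forall>w\<in>W. 0 < real_of_rat w \<and> real_of_rat w < t + 1" "card A0 \<le> cnt P W"
    using mins_count[OF A0(1) A0(3), rule_format, of 0] pos by auto
  have "W \<subseteq> Qn n"
  proof
    fix w assume "w \<in> W"
    then show "w \<in> Qn n" using W n by (intro in_Qn) auto
  qed
  then show False using K W A0 by fastforce
qed

lemma lift_lf: "loc_finite_R (lift P)"
  unfolding loc_finite_R_def
proof
  fix t :: real
  define Sg where "Sg = {S. segment Rplus (lift P) S \<and> S \<inter> {0..t} \<noteq> {}}"
  have p: "partition_on Rplus (lift P)" by (rule lift_part[OF g])
  have rg: "\<forall>x\<in>Rplus. \<exists>\<epsilon>>0. \<exists>X\<in>lift P. {x..<x+\<epsilon>} \<subseteq> X" by (rule lift_rg[OF g])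
  have inj: "inj_on Inf Sg"
  proof (rule inj_onI)
    fix S1 S2 assume S1: "S1 \<in> Sg" and S2: "S2 \<in> Sg" and e: "Inf S1 = Inf S2"
    have "Inf S1 \<in> S1" "Inf S2 \<in> S2" using seg_min[OF p rg] S1 S2 unfolding Sg_def by auto
    then show "S1 = S2" using seg_eq[OF p] S1 S2 e unfolding Sg_def by auto
  qed
  have "Inf ` Sg \<subseteq> insert 0 (mins t)"
  proof
    fix a assume "a \<in> Inf ` Sg"
    then obtain S where S: "S \<in> Sg" "a = Inf S" by blast
    have sg: "segment Rplus (lift P) S" using S unfolding Sg_def by simp
    have aS: "a \<in> S" and amin: "\<forall>s\<in>S. a \<le> s" using seg_min[OF p rg sg] S by auto
    obtain x where x: "x \<in> S" "x \<in> {0..t}" using S unfolding Sg_def by blast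
    have "a \<le> t" using amin x by force
    moreover have "0 \<le> a" using aS sg unfolding segment_def convex_in_def Rplus_def by auto
    ultimately show "a \<in> insert 0 (mins t)" using sg aS amin unfolding mins_def by force
  qed
  then have "finite (Inf ` Sg)" using mins_finite finite_subset by blast
  then show "finite Sg" using finite_imageD[OF _ inj] by blast
qed

lemma lift_Ploc: "lift P \<in> Ploc_set"
  unfolding Ploc_set_def using lift_part[OF g] lift_rc[OF g] lift_lf by (simp add: Parts_iff)

end



lemma meas_into_part:
  assumes f: "f \<in> space M \<rightarrow> X"
    and pre: "\<And>z E. finite z \<Longrightarrow> z \<subseteq> A \<Longrightarrow> E \<subseteq> Parts z \<Longrightarrow> {x\<in>space M. Rest z (f x) \<in> E} \<in> sets M"
  shows "f \<in> measurable M (part_measure A X)"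
  unfolding part_measure_def
proof (rule measurable_measure_of)
  show "{{P \<in> X. Rest z P \<in> E} | z E. finite z \<and> z \<subseteq> A \<and> E \<subseteq> Parts z} \<subseteq> Pow X" by auto
  show "f \<in> space M \<rightarrow> X" by (rule f)
  fix y assume "y \<in> {{P \<in> X. Rest z P \<in> E} | z E. finite z \<and> z \<subseteq> A \<and> E \<subseteq> Parts z}"
  then obtain z E where y: "y = {P \<in> X. Rest z P \<in> E}" "finite z" "z \<subseteq> A" "E \<subseteq> Parts z" by blast
  have "f -` y \<inter> space M = {x\<in>space M. Rest z (f x) \<in> E}" using f y(1) by auto
  then show "f -` y \<inter> space M \<in> sets M" using pre[OF y(2-4)] by simp
qed

lemma Qplus_vimage: "real_of_rat -` Rplus = Qplus"
  unfolding Rplus_def Qplus_def by auto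

lemma Rest_Q_part: assumes p: "partition_on Rplus P'" shows "partition_on Qplus (Rest_Q P')"
proof -
  have "(\<lambda>B. real_of_rat -` B \<inter> Qplus) ` P' = (-`) real_of_rat ` P'"
  proof (intro image_cong refl)
    fix B assume "B \<in> P'"
    then have "B \<subseteq> Rplus" using p unfolding partition_on_def by blast
    then show "real_of_rat -` B \<inter> Qplus = real_of_rat -` B" using Qplus_vimage by blast
  qed
  then have "Rest_Q P' = (-`) real_of_rat ` P' - {{}}" unfolding Rest_Q_def by simp
  then show ?thesis using partition_on_vimage[OF p, of real_of_rat] Qplus_vimage by simp
qed

lemma same_Rest_Q:
  assumes "q \<in> Qplus" "q' \<in> Qplus"
  shows "same (Rest_Q P') q q' \<longleftrightarrow> same P' (real_of_rat q) (real_of_rat q')"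
proof
  assume "same (Rest_Q P') q q'"
  then obtain C where C: "C \<in> Rest_Q P'" "q \<in> C" "q' \<in> C" unfolding same_def by blast
  from C(1) obtain B where "B \<in> P'" "C = real_of_rat -` B \<inter> Qplus" unfolding Rest_Q_def by blast
  then show "same P' (real_of_rat q) (real_of_rat q')" using C unfolding same_def by blast
next
  assume "same P' (real_of_rat q) (real_of_rat q')"
  then obtain B where B: "B \<in> P'" "real_of_rat q \<in> B" "real_of_rat q' \<in> B" unfolding same_def by blast
  have h: "real_of_rat -` B \<inter> Qplus \<in> Rest_Q P'" "q \<in> real_of_rat -` B \<inter> Qplus" "q' \<in> real_of_rat -` B \<inter> Qplus"
    using B assms unfolding Rest_Q_def by auto
  show "same (Rest_Q P') q q'" unfolding same_def
    by (rule bexI[where x="real_of_rat -` B \<inter> Qplus"]) (use h in auto)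
qed

definition sameL :: "rat set set \<Rightarrow> real \<Rightarrow> real \<Rightarrow> bool" where
  "sameL Pq x y \<longleftrightarrow> (\<exists>m::nat. \<forall>q. \<forall>q'. q \<in> Qplus \<longrightarrow> q' \<in> Qplus \<longrightarrow>
      (x \<le> real_of_rat q \<and> real_of_rat q < x + inverse (real (Suc m)) \<and>
       y \<le> real_of_rat q' \<and> real_of_rat q' < y + inverse (real (Suc m))) \<longrightarrow> same Pq q q')"

lemma sameL_iff:
  assumes p: "partition_on Rplus P'"
    and rg: "\<forall>x\<in>Rplus. \<exists>\<epsilon>>0. \<exists>X\<in>P'. {x..<x+\<epsilon>} \<subseteq> X"
    and xy: "x \<in> Rplus" "y \<in> Rplus"
  shows "same P' x y \<longleftrightarrow> sameL (Rest_Q P') x y"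
proof -
  obtain ex Xx where ex: "ex > 0" "Xx \<in> P'" "{x..<x+ex} \<subseteq> Xx" using rg xy(1) by blast
  obtain ey Xy where ey: "ey > 0" "Xy \<in> P'" "{y..<y+ey} \<subseteq> Xy" using rg xy(2) by blast
  have xX: "x \<in> Xx" "y \<in> Xy" using ex ey by auto
  have x0: "0 \<le> x" "0 \<le> y" using xy unfolding Rplus_def by auto
  show ?thesis
  proof
    assume "same P' x y"
    then obtain B where B: "B \<in> P'" "x \<in> B" "y \<in> B" unfolding same_def by blast
    have XB: "Xx = B" "Xy = B" using same_block[OF p] B ex ey xX by blast+
    obtain m where m: "inverse (real (Suc m)) < min ex ey" using reals_Archimedean[of "min ex ey"] ex ey by auto
    show "sameL (Rest_Q P') x y" unfolding sameL_def
    proof (intro exI[of _ m] allI impI)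
      fix q q' assume qQ: "q \<in> Qplus" "q' \<in> Qplus" and
        c: "x \<le> real_of_rat q \<and> real_of_rat q < x + inverse (real (Suc m)) \<and>
          y \<le> real_of_rat q' \<and> real_of_rat q' < y + inverse (real (Suc m))"
      have "real_of_rat q \<in> {x..<x+ex}" "real_of_rat q' \<in> {y..<y+ey}" using c m by auto
      then have "real_of_rat q \<in> B" "real_of_rat q' \<in> B" using ex ey XB by auto
      then have "same P' (real_of_rat q) (real_of_rat q')" unfolding same_def using B by blast
      then show "same (Rest_Q P') q q'" using same_Rest_Q[OF qQ] by simp
    qed
  next
    assume "sameL (Rest_Q P') x y"
    then obtain m where m: "\<forall>q q'. q \<in> Qplus \<longrightarrow> q' \<in> Qplus \<longrightarrow>
      (x \<le> real_of_rat q \<and> real_of_rat q < x + inverse (real (Suc m)) \<and>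
       y \<le> real_of_rat q' \<and> real_of_rat q' < y + inverse (real (Suc m))) \<longrightarrow> same (Rest_Q P') q q'"
      unfolding sameL_def by blast
    have ip: "0 < inverse (real (Suc m))" by simp
    obtain q where q: "q \<in> Qplus" "x < real_of_rat q" "real_of_rat q < x + min ex (inverse (real (Suc m)))"
      using rat_between[OF x0(1), of "min ex (inverse (real (Suc m)))"] ex ip by auto
    obtain q' where q': "q' \<in> Qplus" "y < real_of_rat q'" "real_of_rat q' < y + min ey (inverse (real (Suc m)))"
      using rat_between[OF x0(2), of "min ey (inverse (real (Suc m)))"] ey ip by auto
    have "x \<le> real_of_rat q \<and> real_of_rat q < x + inverse (real (Suc m)) \<and>
       y \<le> real_of_rat q' \<and> real_of_rat q' < y + inverse (real (Suc m))" using q q' by auto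
    then have "same (Rest_Q P') q q'" using m q(1) q'(1) by blast
    then have "same P' (real_of_rat q) (real_of_rat q')" using same_Rest_Q[OF q(1) q'(1)] by simp
    then obtain C where C: "C \<in> P'" "real_of_rat q \<in> C" "real_of_rat q' \<in> C" unfolding same_def by blast
    have "real_of_rat q \<in> Xx" "real_of_rat q' \<in> Xy" using q q' ex ey by auto
    then have "C = Xx" "C = Xy" using same_block[OF p] C ex ey by blast+
    then show "same P' x y" unfolding same_def using xX ex by blast
  qed
qed

lemma pred_same: "Measurable.pred P_Q (\<lambda>Pq. same Pq (q::rat) q')"
proof (cases "q \<in> Qplus \<and> q' \<in> Qplus")
  case True
  have "{Pq \<in> space P_Q. same Pq q q'} \<in> sets P_Q"
    unfolding space_P_Q unfolding P_Q_def by (rule same_part) (use True in auto)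
  then show ?thesis by (simp only: pred_def)
next
  case False
  have "{Pq \<in> space P_Q. same Pq q q'} = {}"
    using False same_in[of Qplus _ q q'] unfolding space_P_Q by (auto simp: Parts_iff)
  then show ?thesis by (simp only: pred_def) simp
qed

lemma pred_sameL: "Measurable.pred P_Q (\<lambda>Pq. sameL Pq x y)"
  unfolding sameL_def by (intro pred_intros_countable pred_intros_logic pred_same measurable_const) auto



lemma Ploc_part: "P' \<in> Ploc_set \<Longrightarrow> partition_on Rplus P'"
  unfolding Ploc_set_def Parts_iff by simp

lemma Ploc_rg:
  assumes P: "P' \<in> Ploc_set"
  shows "\<forall>x\<in>Rplus. \<exists>\<epsilon>>0. \<exists>X\<in>P'. {x..<x+\<epsilon>} \<subseteq> X"
proof
  fix x assume xR: "x \<in> Rplus"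
  have p: "partition_on Rplus P'" using P by (rule Ploc_part)
  obtain X where X: "X \<in> P'" "x \<in> X" using p xR unfolding partition_on_def by blast
  define S where "S = \<Union>{T. convex_in Rplus T \<and> T \<subseteq> X \<and> x \<in> T}"
  have c1: "convex_in Rplus {x}" using xR unfolding convex_in_def by auto
  have xS: "x \<in> S" unfolding S_def using c1 X by blast
  have SX: "S \<subseteq> X" unfolding S_def by blast
  have cvS: "convex_in Rplus S" unfolding convex_in_def
  proof (intro conjI ballI impI)
    show "S \<subseteq> Rplus" unfolding S_def convex_in_def by blast
    fix u v w assume u: "u \<in> S" and v: "v \<in> S" and w: "w \<in> Rplus" "u \<le> w \<and> w \<le> v"
    obtain T1 where T1: "convex_in Rplus T1" "T1 \<subseteq> X" "x \<in> T1" "u \<in> T1" using u unfolding S_def by blast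
    obtain T2 where T2: "convex_in Rplus T2" "T2 \<subseteq> X" "x \<in> T2" "v \<in> T2" using v unfolding S_def by blast
    have d1: "\<And>a b c. a \<in> T1 \<Longrightarrow> b \<in> T1 \<Longrightarrow> c \<in> Rplus \<Longrightarrow> a \<le> c \<Longrightarrow> c \<le> b \<Longrightarrow> c \<in> T1"
      using T1(1) unfolding convex_in_def by blast
    have d2: "\<And>a b c. a \<in> T2 \<Longrightarrow> b \<in> T2 \<Longrightarrow> c \<in> Rplus \<Longrightarrow> a \<le> c \<Longrightarrow> c \<le> b \<Longrightarrow> c \<in> T2"
      using T2(1) unfolding convex_in_def by blast
    show "w \<in> S"
    proof (cases "w \<le> x")
      case True
      then have "w \<in> T1" using d1[OF T1(4) T1(3) w(1)] w(2) by blast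
      then show ?thesis unfolding S_def using T1 by blast
    next
      case False
      then have "x \<le> w" by simp
      then have "w \<in> T2" using d2[OF T2(3) T2(4) w(1)] w(2) by blast
      then show ?thesis unfolding S_def using T2 by blast
    qed
  qed
  have seg: "segment Rplus P' S" unfolding segment_def
  proof (intro conjI allI impI)
    show "S \<noteq> {}" using xS by blast
    show "convex_in Rplus S" by (rule cvS)
    show "\<exists>B\<in>P'. S \<subseteq> B" using X SX by blast
    fix T assume T: "convex_in Rplus T \<and> (\<exists>B\<in>P'. T \<subseteq> B) \<and> S \<subseteq> T"
    then obtain B where B: "B \<in> P'" "T \<subseteq> B" by blast
    have "x \<in> T" using T xS by blast
    then have "B = X" using same_block[OF p B(1) X(1)] B X by blast
    then have "T \<subseteq> S" unfolding S_def using T B \<open>x \<in> T\<close> by blast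
    then show "T = S" using T by blast
  qed
  have rc: "right_cont_R P'" using P unfolding Ploc_set_def by simp
  have "(\<exists>a b. a < b \<and> S = {a..<b}) \<or> (\<exists>a. S = {a..})" using rc seg unfolding right_cont_R_def by blast
  then show "\<exists>\<epsilon>>0. \<exists>X\<in>P'. {x..<x+\<epsilon>} \<subseteq> X"
  proof
    assume "\<exists>a b. a < b \<and> S = {a..<b}"
    then obtain a b where ab: "a < b" "S = {a..<b}" by blast
    then have "{x..<x+(b-x)} \<subseteq> S" "b - x > 0" using xS by auto
    then show ?thesis using SX X by blast
  next
    assume "\<exists>a. S = {a..}"
    then obtain a where a: "S = {a..}" by blast
    then have "{x..<x+1} \<subseteq> S" using xS by auto
    then show ?thesis using SX X by (intro exI[of _ 1]) auto
  qed
qed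

lemma Rest_Q_meas: "Rest_Q \<in> measurable P_loc P_Q"
  unfolding P_Q_def
proof (rule meas_into_part)
  show "Rest_Q \<in> space P_loc \<rightarrow> Parts Qplus"
    unfolding space_P_loc using Rest_Q_part Ploc_part Parts_iff by blast
  fix z E assume z: "finite z" "z \<subseteq> Qplus" and E: "E \<subseteq> Parts z"
  define zr where "zr = real_of_rat ` z"
  define E' where "E' = {R' \<in> Parts zr. \<exists>R\<in>E. \<forall>x\<in>z. \<forall>y\<in>z. same R x y \<longleftrightarrow> same R' (real_of_rat x) (real_of_rat y)}"
  have zr: "finite zr" "zr \<subseteq> Rplus" unfolding zr_def using z unfolding Rplus_def Qplus_def by auto
  have eq: "{P' \<in> space P_loc. Rest z (Rest_Q P') \<in> E} = {P' \<in> Ploc_set. Rest zr P' \<in> E'}"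
  proof (intro set_eqI iffI)
    fix P' assume "P' \<in> {P' \<in> space P_loc. Rest z (Rest_Q P') \<in> E}"
    then have P: "P' \<in> Ploc_set" "Rest z (Rest_Q P') \<in> E" unfolding space_P_loc by auto
    have p: "partition_on Rplus P'" using Ploc_part[OF P(1)] .
    have "Rest zr P' \<in> Parts zr" using Rest_part[OF p zr(2)] Parts_iff by blast
    moreover have "\<forall>x\<in>z. \<forall>y\<in>z. same (Rest z (Rest_Q P')) x y \<longleftrightarrow> same (Rest zr P') (real_of_rat x) (real_of_rat y)"
    proof (intro ballI)
      fix x y assume xy: "x \<in> z" "y \<in> z"
      have "same (Rest z (Rest_Q P')) x y \<longleftrightarrow> same (Rest_Q P') x y" using same_Rest[OF xy] .
      also have "\<dots> \<longleftrightarrow> same P' (real_of_rat x) (real_of_rat y)" using same_Rest_Q xy z by blast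
      also have "\<dots> \<longleftrightarrow> same (Rest zr P') (real_of_rat x) (real_of_rat y)"
        using same_Rest[of "real_of_rat x" zr "real_of_rat y" P'] xy unfolding zr_def by simp
      finally show "same (Rest z (Rest_Q P')) x y \<longleftrightarrow> same (Rest zr P') (real_of_rat x) (real_of_rat y)" .
    qed
    ultimately show "P' \<in> {P' \<in> Ploc_set. Rest zr P' \<in> E'}" unfolding E'_def using P by blast
  next
    fix P' assume "P' \<in> {P' \<in> Ploc_set. Rest zr P' \<in> E'}"
    then have P: "P' \<in> Ploc_set" "Rest zr P' \<in> E'" by auto
    have p: "partition_on Rplus P'" using Ploc_part[OF P(1)] .
    obtain R where R: "R \<in> E" "\<forall>x\<in>z. \<forall>y\<in>z. same R x y \<longleftrightarrow> same (Rest zr P') (real_of_rat x) (real_of_rat y)"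
      using P(2) unfolding E'_def by blast
    have pq: "partition_on Qplus (Rest_Q P')" using Rest_Q_part[OF p] .
    have "R = Rest z (Rest_Q P')"
    proof (rule part_eqI)
      show "partition_on z R" using R E Parts_iff by blast
      show "partition_on z (Rest z (Rest_Q P'))" using Rest_part[OF pq z(2)] .
      fix x y assume xy: "x \<in> z" "y \<in> z"
      have "same R x y \<longleftrightarrow> same (Rest zr P') (real_of_rat x) (real_of_rat y)" using R xy by blast
      also have "\<dots> \<longleftrightarrow> same P' (real_of_rat x) (real_of_rat y)"
        using same_Rest[of "real_of_rat x" zr "real_of_rat y" P'] xy unfolding zr_def by simp
      also have "\<dots> \<longleftrightarrow> same (Rest_Q P') x y" using same_Rest_Q xy z by blast
      also have "\<dots> \<longleftrightarrow> same (Rest z (Rest_Q P')) x y" using same_Rest[OF xy] by simp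
      finally show "same R x y \<longleftrightarrow> same (Rest z (Rest_Q P')) x y" .
    qed
    then show "P' \<in> {P' \<in> space P_loc. Rest z (Rest_Q P') \<in> E}" using R P unfolding space_P_loc by auto
  qed
  have "E' \<subseteq> Parts zr" unfolding E'_def by blast
  then have "{P' \<in> Ploc_set. Rest zr P' \<in> E'} \<in> sets P_loc"
    unfolding P_loc_def by (rule gen_part[OF zr])
  then show "{P' \<in> space P_loc. Rest z (Rest_Q P') \<in> E} \<in> sets P_loc" by (simp only: eq)
qed

lemma sets_Ploc_sub: "sets P_loc \<subseteq> sets (vimage_algebra Ploc_set Rest_Q P_Q)"
proof -
  have fs: "Rest_Q \<in> Ploc_set \<rightarrow> space P_Q"
    unfolding space_P_Q using Rest_Q_part Ploc_part Parts_iff by blast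
  have V: "sets (vimage_algebra Ploc_set Rest_Q P_Q) = {Rest_Q -` A \<inter> Ploc_set | A. A \<in> sets P_Q}"
    by (rule sets_vimage_algebra2[OF fs])
  have gens: "{{P \<in> Ploc_set. Rest z P \<in> E} | z E. finite z \<and> z \<subseteq> Rplus \<and> E \<subseteq> Parts z}
      \<subseteq> sets (vimage_algebra Ploc_set Rest_Q P_Q)"
  proof
    fix Y assume "Y \<in> {{P \<in> Ploc_set. Rest z P \<in> E} | z E. finite z \<and> z \<subseteq> Rplus \<and> E \<subseteq> Parts z}"
    then obtain z E where Y: "Y = {P \<in> Ploc_set. Rest z P \<in> E}" and z: "finite z" "z \<subseteq> Rplus" and E: "E \<subseteq> Parts z"
      by blast
    define B where "B = {Pq \<in> space P_Q. \<exists>R\<in>E. \<forall>x\<in>z. \<forall>y\<in>z. same R x y \<longleftrightarrow> sameL Pq x y}"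
    have fE: "finite E" using finite_Parts[OF z(1)] E finite_subset by blast
    have pa: "Measurable.pred P_Q (\<lambda>Pq. same R x y \<longleftrightarrow> sameL Pq x y)" for R x y
      by (rule pred_intros_logic(6)[OF measurable_const pred_sameL]) simp
    have pb: "Measurable.pred P_Q (\<lambda>Pq. \<forall>y\<in>z. same R x y \<longleftrightarrow> sameL Pq x y)" for R x
      by (rule pred_intros_finite(3)[OF z(1) pa])
    have pc: "Measurable.pred P_Q (\<lambda>Pq. \<forall>x\<in>z. \<forall>y\<in>z. same R x y \<longleftrightarrow> sameL Pq x y)" for R
      by (rule pred_intros_finite(3)[OF z(1) pb])
    have "Measurable.pred P_Q (\<lambda>Pq. \<exists>R\<in>E. \<forall>x\<in>z. \<forall>y\<in>z. same R x y \<longleftrightarrow> sameL Pq x y)"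
      by (rule pred_intros_finite(4)[OF fE pc])
    then have Bs: "B \<in> sets P_Q" unfolding B_def by (simp only: pred_def)
    have "Y = Rest_Q -` B \<inter> Ploc_set"
    proof (intro set_eqI iffI)
      fix P' assume "P' \<in> Y"
      then have P: "P' \<in> Ploc_set" "Rest z P' \<in> E" using Y by auto
      have p: "partition_on Rplus P'" using Ploc_part[OF P(1)] .
      have "\<forall>x\<in>z. \<forall>y\<in>z. same (Rest z P') x y \<longleftrightarrow> sameL (Rest_Q P') x y"
      proof (intro ballI)
        fix x y assume xy: "x \<in> z" "y \<in> z"
        then have xyR: "x \<in> Rplus" "y \<in> Rplus" using z(2) by auto
        show "same (Rest z P') x y \<longleftrightarrow> sameL (Rest_Q P') x y"
          using same_Rest[OF xy, of P'] sameL_iff[OF p Ploc_rg[OF P(1)] xyR] by simp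
      qed
      moreover have "Rest_Q P' \<in> space P_Q" using fs P by blast
      ultimately show "P' \<in> Rest_Q -` B \<inter> Ploc_set" unfolding B_def using P by blast
    next
      fix P' assume "P' \<in> Rest_Q -` B \<inter> Ploc_set"
      then have P: "P' \<in> Ploc_set" and "Rest_Q P' \<in> B" by auto
      then obtain R where R: "R \<in> E" "\<forall>x\<in>z. \<forall>y\<in>z. same R x y \<longleftrightarrow> sameL (Rest_Q P') x y"
        unfolding B_def by blast
      have p: "partition_on Rplus P'" using Ploc_part[OF P] .
      have "R = Rest z P'"
      proof (rule part_eqI)
        show "partition_on z R" using R E Parts_iff by blast
        show "partition_on z (Rest z P')" using Rest_part[OF p z(2)] .
        fix x y assume xy: "x \<in> z" "y \<in> z"
        then have xyR: "x \<in> Rplus" "y \<in> Rplus" using z(2) by auto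
        have "same R x y \<longleftrightarrow> sameL (Rest_Q P') x y" using R xy by blast
        then show "same R x y \<longleftrightarrow> same (Rest z P') x y"
          using same_Rest[OF xy, of P'] sameL_iff[OF p Ploc_rg[OF P] xyR] by simp
      qed
      then show "P' \<in> Y" using Y R P by simp
    qed
    then show "Y \<in> sets (vimage_algebra Ploc_set Rest_Q P_Q)" unfolding V using Bs by blast
  qed
  have "sets P_loc = sigma_sets Ploc_set {{P \<in> Ploc_set. Rest z P \<in> E} | z E. finite z \<and> z \<subseteq> Rplus \<and> E \<subseteq> Parts z}"
    unfolding P_loc_def by (rule sets_part)
  also have "\<dots> \<subseteq> sets (vimage_algebra Ploc_set Rest_Q P_Q)"
    using sets.sigma_sets_subset[OF gens] by simp
  finally show ?thesis .
qed

lemma Rplus_Ploc: "{Rplus} \<in> Ploc_set"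
proof -
  have ne: "Rplus \<noteq> {}" unfolding Rplus_def by auto
  have p: "partition_on Rplus {Rplus}" by (rule partition_on_space[OF ne])
  have cvR: "convex_in Rplus Rplus" unfolding convex_in_def by auto
  have sg: "S = Rplus" if "segment Rplus {Rplus} S" for S
    using that cvR unfolding segment_def by blast
  have "right_cont_R {Rplus}" unfolding right_cont_R_def
  proof (intro allI impI disjI2)
    fix S assume "segment Rplus {Rplus} S"
    then have "S = {0..}" using sg unfolding Rplus_def by auto
    then show "\<exists>a. S = {a..}" by blast
  qed
  moreover have "loc_finite_R {Rplus}" unfolding loc_finite_R_def
  proof
    fix t :: real
    have "{S. segment Rplus {Rplus} S \<and> S \<inter> {0..t} \<noteq> {}} \<subseteq> {Rplus}" using sg by blast
    then show "finite {S. segment Rplus {Rplus} S \<and> S \<inter> {0..t} \<noteq> {}}" using finite_subset by blast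
  qed
  ultimately show ?thesis unfolding Ploc_set_def Parts_iff using p by simp
qed



lemma Rest_in_iff_sameL:
  assumes p: "partition_on Rplus P'"
    and rg: "\<forall>x\<in>Rplus. \<exists>\<epsilon>>0. \<exists>X\<in>P'. {x..<x+\<epsilon>} \<subseteq> X"
    and z: "z \<subseteq> Rplus" and E: "E \<subseteq> Parts z"
  shows "Rest z P' \<in> E \<longleftrightarrow> (\<exists>R\<in>E. \<forall>x\<in>z. \<forall>y\<in>z. same R x y \<longleftrightarrow> sameL (Rest_Q P') x y)"
proof -
  have key: "same (Rest z P') x y \<longleftrightarrow> sameL (Rest_Q P') x y" if xy: "x \<in> z" "y \<in> z" for x y
  proof -
    have xyR: "x \<in> Rplus" "y \<in> Rplus" using xy z by auto
    show ?thesis using same_Rest[OF xy, of P'] sameL_iff[OF p rg xyR] by simp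
  qed
  show ?thesis
  proof
    assume "Rest z P' \<in> E"
    then show "\<exists>R\<in>E. \<forall>x\<in>z. \<forall>y\<in>z. same R x y \<longleftrightarrow> sameL (Rest_Q P') x y"
      using key by blast
  next
    assume "\<exists>R\<in>E. \<forall>x\<in>z. \<forall>y\<in>z. same R x y \<longleftrightarrow> sameL (Rest_Q P') x y"
    then obtain R where R: "R \<in> E" "\<forall>x\<in>z. \<forall>y\<in>z. same R x y \<longleftrightarrow> sameL (Rest_Q P') x y" by blast
    have "R = Rest z P'"
    proof (rule part_eqI)
      show "partition_on z R" using R E Parts_iff by blast
      show "partition_on z (Rest z P')" using Rest_part[OF p z] .
      fix x y assume xy: "x \<in> z" "y \<in> z"
      show "same R x y \<longleftrightarrow> same (Rest z P') x y" using R(2) key[OF xy] xy by blast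
    qed
    then show "Rest z P' \<in> E" using R by simp
  qed
qed

lemma sameL_set:
  assumes z: "finite z" and fE: "finite E"
  shows "{Pq \<in> space P_Q. \<exists>R\<in>E. \<forall>x\<in>z. \<forall>y\<in>z. same R x y \<longleftrightarrow> sameL Pq x y} \<in> sets P_Q"
proof -
  have pa: "Measurable.pred P_Q (\<lambda>Pq. same R x y \<longleftrightarrow> sameL Pq x y)" for R x y
    by (rule pred_intros_logic(6)[OF measurable_const pred_sameL]) simp
  have pb: "Measurable.pred P_Q (\<lambda>Pq. \<forall>y\<in>z. same R x y \<longleftrightarrow> sameL Pq x y)" for R x
    by (rule pred_intros_finite(3)[OF z pa])
  have pc: "Measurable.pred P_Q (\<lambda>Pq. \<forall>x\<in>z. \<forall>y\<in>z. same R x y \<longleftrightarrow> sameL Pq x y)" for R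
    by (rule pred_intros_finite(3)[OF z pb])
  have "Measurable.pred P_Q (\<lambda>Pq. \<exists>R\<in>E. \<forall>x\<in>z. \<forall>y\<in>z. same R x y \<longleftrightarrow> sameL Pq x y)"
    by (rule pred_intros_finite(4)[OF fE pc])
  then show ?thesis by (simp only: pred_def)
qed

lemma uniq_Ploc:
  assumes s1: "sets \<mu>1 = sets P_loc" and s2: "sets \<mu>2 = sets P_loc"
    and d: "distr \<mu>1 P_Q Rest_Q = distr \<mu>2 P_Q Rest_Q"
  shows "\<mu>1 = \<mu>2"
proof (rule measure_eqI)
  show "sets \<mu>1 = sets \<mu>2" using s1 s2 by simp
  fix A assume A: "A \<in> sets \<mu>1"
  have fs: "Rest_Q \<in> Ploc_set \<rightarrow> space P_Q"
    unfolding space_P_Q using Rest_Q_part Ploc_part Parts_iff by blast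
  have "A \<in> sets (vimage_algebra Ploc_set Rest_Q P_Q)" using A s1 sets_Ploc_sub by blast
  then obtain B where B: "B \<in> sets P_Q" "A = Rest_Q -` B \<inter> Ploc_set"
    unfolding sets_vimage_algebra2[OF fs] by blast
  have m1: "Rest_Q \<in> measurable \<mu>1 P_Q" using Rest_Q_meas measurable_cong_sets[OF s1, of P_Q P_Q] by simp
  have m2: "Rest_Q \<in> measurable \<mu>2 P_Q" using Rest_Q_meas measurable_cong_sets[OF s2, of P_Q P_Q] by simp
  have sp1: "space \<mu>1 = Ploc_set" using sets_eq_imp_space_eq[OF s1] space_P_loc by simp
  have sp2: "space \<mu>2 = Ploc_set" using sets_eq_imp_space_eq[OF s2] space_P_loc by simp
  have "emeasure \<mu>1 A = emeasure (distr \<mu>1 P_Q Rest_Q) B"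
    using emeasure_distr[OF m1 B(1)] B(2) sp1 by simp
  also have "\<dots> = emeasure (distr \<mu>2 P_Q Rest_Q) B" using d by simp
  also have "\<dots> = emeasure \<mu>2 A"
    using emeasure_distr[OF m2 B(1)] B(2) sp2 by simp
  finally show "emeasure \<mu>1 A = emeasure \<mu>2 A" .
qed

theorem lemma3:
  fixes \<rho> :: real and mubar :: "rat set set measure"
  assumes "\<rho> > 0"
    and "prob_space mubar"
    and "sets mubar = sets P_Q"
    and "AE P in mubar. right_cont_Q P"
    and "\<And>z. finite z \<Longrightarrow> z \<subseteq> Qplus \<Longrightarrow>
           distr mubar (count_space (Parts z)) (Rest z) = mu_rz \<rho> z"
  shows "\<exists>!\<mu>. sets \<mu> = sets P_loc \<and> distr \<mu> P_Q Rest_Q = mubar"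
proof -
  interpret setting \<rho> mubar by (rule setting.intro[OF assms(1,2,3,5)])
  have ae: "AE P in mubar. right_cont_Q P \<and> bnd_cnt P" using assms(4) AE_bnd by (rule AE_conjI)
  then obtain N where N: "{P \<in> space mubar. \<not> (right_cont_Q P \<and> bnd_cnt P)} \<subseteq> N"
      "emeasure mubar N = 0" "N \<in> sets mubar"
    by (rule AE_E)
  define G where "G = space mubar - N"
  have Gs: "G \<in> sets mubar" unfolding G_def using N(3) by auto
  have gG: "goodQ P" if "P \<in> G" for P
  proof -
    have "P \<in> space mubar" "right_cont_Q P" "bnd_cnt P" using that N(1) unfolding G_def by auto
    then show ?thesis unfolding goodQ_def using sp rc_rat_from_Q by auto
  qed
  define L where "L P = (if P \<in> G then lift P else {Rplus})" for P
  have Lsp: "L \<in> space mubar \<rightarrow> Ploc_set"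
    unfolding L_def using lift_Ploc gG Rplus_Ploc by auto
  have spq: "space mubar = space P_Q" using sp space_P_Q by simp
  have Lmeas: "L \<in> measurable mubar P_loc"
    unfolding P_loc_def
  proof (rule meas_into_part[OF Lsp])
    fix z E assume z: "finite z" "z \<subseteq> Rplus" and E: "E \<subseteq> Parts z"
    have fE: "finite E" using finite_Parts[OF z(1)] E finite_subset by blast
    define Bs where "Bs = {Pq \<in> space P_Q. \<exists>R\<in>E. \<forall>x\<in>z. \<forall>y\<in>z. same R x y \<longleftrightarrow> sameL Pq x y}"
    have Bm: "Bs \<in> sets mubar" unfolding Bs_def st using sameL_set[OF z(1) fE] .
    define C where "C = (if Rest z {Rplus} \<in> E then space mubar else {})"
    have Cm: "C \<in> sets mubar" unfolding C_def by auto
    have eq: "{P \<in> space mubar. Rest z (L P) \<in> E} = (G \<inter> Bs) \<union> ((space mubar - G) \<inter> C)"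
    proof (intro set_eqI)
      fix P
      show "P \<in> {P \<in> space mubar. Rest z (L P) \<in> E} \<longleftrightarrow> P \<in> (G \<inter> Bs) \<union> ((space mubar - G) \<inter> C)"
      proof (cases "P \<in> G")
        case True
        have g: "goodQ P" using gG[OF True] .
        have "Rest z (L P) \<in> E \<longleftrightarrow> Rest z (lift P) \<in> E" unfolding L_def using True by simp
        also have "\<dots> \<longleftrightarrow> (\<exists>R\<in>E. \<forall>x\<in>z. \<forall>y\<in>z. same R x y \<longleftrightarrow> sameL (Rest_Q (lift P)) x y)"
          by (rule Rest_in_iff_sameL[OF lift_part[OF g] lift_rg[OF g] z(2) E])
        also have "Rest_Q (lift P) = P" by (rule Rest_Q_lift[OF g])
        finally show ?thesis using True unfolding G_def Bs_def spq[symmetric] by auto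
      next
        case False
        then show ?thesis unfolding L_def C_def by auto
      qed
    qed
    show "{P \<in> space mubar. Rest z (L P) \<in> E} \<in> sets mubar"
      unfolding eq using Gs Bm Cm by auto
  qed
  define \<mu> where "\<mu> = distr mubar P_loc L"
  have s\<mu>: "sets \<mu> = sets P_loc" unfolding \<mu>_def by simp
  have "distr \<mu> P_Q Rest_Q = distr mubar P_Q (Rest_Q \<circ> L)"
    unfolding \<mu>_def by (rule distr_distr[OF Rest_Q_meas Lmeas])
  also have "\<dots> = distr mubar P_Q (\<lambda>x. x)"
  proof (rule distr_cong_AE[OF refl refl])
    have "N \<in> null_sets mubar" using N by (auto intro: null_setsI)
    then show "AE x in mubar. (Rest_Q \<circ> L) x = x"
    proof (rule AE_I')
      show "{x \<in> space mubar. \<not> (Rest_Q \<circ> L) x = x} \<subseteq> N"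
      proof
        fix x assume x: "x \<in> {x \<in> space mubar. \<not> (Rest_Q \<circ> L) x = x}"
        show "x \<in> N"
        proof (rule ccontr)
          assume "x \<notin> N"
          then have "x \<in> G" using x unfolding G_def by auto
          then have "(Rest_Q \<circ> L) x = x" unfolding L_def using Rest_Q_lift[OF gG] by simp
          then show False using x by simp
        qed
      qed
    qed
    show "Rest_Q \<circ> L \<in> measurable mubar P_Q" by (rule measurable_comp[OF Lmeas Rest_Q_meas])
    show "(\<lambda>x. x) \<in> measurable mubar P_Q" by (rule measurable_ident_sets[OF st])
  qed
  also have "\<dots> = mubar" by (rule distr_id2[OF st[symmetric]])
  finally have d\<mu>: "distr \<mu> P_Q Rest_Q = mubar" .
  show ?thesis
  proof (rule ex1I[of _ \<mu>])
    show "sets \<mu> = sets P_loc \<and> distr \<mu> P_Q Rest_Q = mubar" using s\<mu> d\<mu> by simp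
    fix \<nu> assume "sets \<nu> = sets P_loc \<and> distr \<nu> P_Q Rest_Q = mubar"
    then show "\<nu> = \<mu>" using uniq_Ploc[of \<nu> \<mu>] s\<mu> d\<mu> by simp
  qed
qed


end
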